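(* Let $\mathcal C$ be a pointed category with finite coproducts and $F\colon\mathcal C\to Gr$ a reduced functor. Then there is a natural isomorphism $\theta^F\colon T_1(IF)\to T_1F$ with $\theta^F(t_1(x-1))=t_1(x)$ for $X\in\mathcal C$ and $x\in F(X)$.
   Context: - $IF\colon\mathcal C\to Ab$ is the functor sending $X$ to the augmentation ideal $I(F(X))$ of the group ring $\mathbb Z[F(X)]$, i.e. the kernel of the augmentation $\mathbb Z[F(X)]\to\mathbb Z$. - For a reduced functor $G$ (to groups or abelian groups), $cr_2G(X,X)=\ker(G(X\vee X)\to G(X)\times G(X))$, induced by the retractions. - $T_1G(X)$ is the quotient of $G(X)$ by the (normal) image of $cr_2G(X,X)\subseteq G(X\vee X)$ under $G(\nabla)$, where $\nabla$ is the folding map; $t_1$ is the projection. $F$ is reduced if $F(0)$ is trivial. *)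

theory Defs
  imports "HOL-Algebra.Algebra"
begin

record ('o,'m) cat =
  Obj :: "'o set"
  Mor :: "'m set"
  Dom :: "'m \<Rightarrow> 'o"
  Cod :: "'m \<Rightarrow> 'o"
  Comp :: "'m \<Rightarrow> 'm \<Rightarrow> 'm"   (* Comp CC g f = g o f *)
  Ident :: "'o \<Rightarrow> 'm"

record ('o,'m) pcat = "('o,'m) cat" +
  Zero :: 'o
  Cop :: "'o \<Rightarrow> 'o \<Rightarrow> 'o"
  In1 :: "'o \<Rightarrow> 'o \<Rightarrow> 'm"
  In2 :: "'o \<Rightarrow> 'o \<Rightarrow> 'm"

definition mor_set :: "('o,'m,'x) cat_scheme \<Rightarrow> 'o \<Rightarrow> 'o \<Rightarrow> 'm set" where
  "mor_set CC A B = {f \<in> Mor CC. Dom CC f = A \<and> Cod CC f = B}"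

definition is_cat :: "('o,'m,'x) cat_scheme \<Rightarrow> bool" where
  "is_cat CC \<longleftrightarrow>
     (\<forall>f\<in>Mor CC. Dom CC f \<in> Obj CC \<and> Cod CC f \<in> Obj CC) \<and>
     (\<forall>A\<in>Obj CC. Ident CC A \<in> mor_set CC A A) \<and>
     (\<forall>f\<in>Mor CC. \<forall>g\<in>Mor CC. Cod CC f = Dom CC g \<longrightarrow>
         Comp CC g f \<in> mor_set CC (Dom CC f) (Cod CC g)) \<and>
     (\<forall>f\<in>Mor CC. Comp CC f (Ident CC (Dom CC f)) = f \<and> Comp CC (Ident CC (Cod CC f)) f = f) \<and>
     (\<forall>f\<in>Mor CC. \<forall>g\<in>Mor CC. \<forall>h\<in>Mor CC. Cod CC f = Dom CC g \<longrightarrow> Cod CC g = Dom CC h \<longrightarrow>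
         Comp CC h (Comp CC g f) = Comp CC (Comp CC h g) f)"

definition is_zero_obj :: "('o,'m,'x) cat_scheme \<Rightarrow> 'o \<Rightarrow> bool" where
  "is_zero_obj CC Z \<longleftrightarrow> Z \<in> Obj CC \<and>
     (\<forall>A\<in>Obj CC. (\<exists>!f. f \<in> mor_set CC A Z) \<and> (\<exists>!f. f \<in> mor_set CC Z A))"

definition is_coproduct ::
  "('o,'m,'x) cat_scheme \<Rightarrow> 'o \<Rightarrow> 'o \<Rightarrow> 'o \<Rightarrow> 'm \<Rightarrow> 'm \<Rightarrow> bool" where
  "is_coproduct CC A B P i1 i2 \<longleftrightarrow> P \<in> Obj CC \<and> i1 \<in> mor_set CC A P \<and> i2 \<in> mor_set CC B P \<and>
     (\<forall>Z\<in>Obj CC. \<forall>f\<in>mor_set CC A Z. \<forall>g\<in>mor_set CC B Z.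
        \<exists>!h. h \<in> mor_set CC P Z \<and> Comp CC h i1 = f \<and> Comp CC h i2 = g)"

text \<open>A pointed category with finite coproducts: a category with a zero object
  (which is the empty coproduct) and chosen binary coproducts.\<close>
definition pointed_cat_fin_coprod :: "('o,'m,'x) pcat_scheme \<Rightarrow> bool" where
  "pointed_cat_fin_coprod CC \<longleftrightarrow> is_cat CC \<and> is_zero_obj CC (Zero CC) \<and>
     (\<forall>A\<in>Obj CC. \<forall>B\<in>Obj CC. is_coproduct CC A B (Cop CC A B) (In1 CC A B) (In2 CC A B))"

definition zero_mor :: "('o,'m,'x) pcat_scheme \<Rightarrow> 'o \<Rightarrow> 'o \<Rightarrow> 'm" where
  "zero_mor CC A B = Comp CC (THE g. g \<in> mor_set CC (Zero CC) B) (THE f. f \<in> mor_set CC A (Zero CC))"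

definition copair :: "('o,'m,'x) pcat_scheme \<Rightarrow> 'o \<Rightarrow> 'o \<Rightarrow> 'o \<Rightarrow> 'm \<Rightarrow> 'm \<Rightarrow> 'm" where
  "copair CC A B Z f g = (THE h. h \<in> mor_set CC (Cop CC A B) Z \<and>
      Comp CC h (In1 CC A B) = f \<and> Comp CC h (In2 CC A B) = g)"

definition fold_mor :: "('o,'m,'x) pcat_scheme \<Rightarrow> 'o \<Rightarrow> 'm" where
  "fold_mor CC A = copair CC A A A (Ident CC A) (Ident CC A)"

definition retr1 :: "('o,'m,'x) pcat_scheme \<Rightarrow> 'o \<Rightarrow> 'm" where
  "retr1 CC A = copair CC A A A (Ident CC A) (zero_mor CC A A)"

definition retr2 :: "('o,'m,'x) pcat_scheme \<Rightarrow> 'o \<Rightarrow> 'm" where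
  "retr2 CC A = copair CC A A A (zero_mor CC A A) (Ident CC A)"

text \<open>A functor CC -> Gr, given by an object map F and a morphism map Fm
  (Fm f is a function on the carrier of F (Dom f)).\<close>
definition group_functor ::
  "('o,'m,'x) cat_scheme \<Rightarrow> ('o \<Rightarrow> ('a,'b) monoid_scheme) \<Rightarrow> ('m \<Rightarrow> 'a \<Rightarrow> 'a) \<Rightarrow> bool" where
  "group_functor CC F Fm \<longleftrightarrow>
     (\<forall>A\<in>Obj CC. group (F A)) \<and>
     (\<forall>f\<in>Mor CC. Fm f \<in> hom (F (Dom CC f)) (F (Cod CC f))) \<and>
     (\<forall>A\<in>Obj CC. \<forall>x\<in>carrier (F A). Fm (Ident CC A) x = x) \<and>
     (\<forall>f\<in>Mor CC. \<forall>g\<in>Mor CC. Cod CC f = Dom CC g \<longrightarrow>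
        (\<forall>x\<in>carrier (F (Dom CC f)). Fm (Comp CC g f) x = Fm g (Fm f x)))"

definition reduced :: "('o,'m,'x) pcat_scheme \<Rightarrow> ('o \<Rightarrow> ('a,'b) monoid_scheme) \<Rightarrow> bool" where
  "reduced CC F \<longleftrightarrow> carrier (F (Zero CC)) = {\<one>\<^bsub>F (Zero CC)\<^esub>}"

definition cr2 ::
  "('o,'m,'x) pcat_scheme \<Rightarrow> ('o \<Rightarrow> ('a,'b) monoid_scheme) \<Rightarrow> ('m \<Rightarrow> 'a \<Rightarrow> 'a) \<Rightarrow> 'o \<Rightarrow> 'a set" where
  "cr2 CC F Fm A = {z \<in> carrier (F (Cop CC A A)).
      Fm (retr1 CC A) z = \<one>\<^bsub>F A\<^esub> \<and> Fm (retr2 CC A) z = \<one>\<^bsub>F A\<^esub>}"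

definition T1_kernel ::
  "('o,'m,'x) pcat_scheme \<Rightarrow> ('o \<Rightarrow> ('a,'b) monoid_scheme) \<Rightarrow> ('m \<Rightarrow> 'a \<Rightarrow> 'a) \<Rightarrow> 'o \<Rightarrow> 'a set" where
  "T1_kernel CC F Fm A = Fm (fold_mor CC A) ` cr2 CC F Fm A"

definition T1 ::
  "('o,'m,'x) pcat_scheme \<Rightarrow> ('o \<Rightarrow> ('a,'b) monoid_scheme) \<Rightarrow> ('m \<Rightarrow> 'a \<Rightarrow> 'a) \<Rightarrow> 'o \<Rightarrow> 'a set monoid" where
  "T1 CC F Fm A = F A Mod T1_kernel CC F Fm A"

definition t1 ::
  "('o,'m,'x) pcat_scheme \<Rightarrow> ('o \<Rightarrow> ('a,'b) monoid_scheme) \<Rightarrow> ('m \<Rightarrow> 'a \<Rightarrow> 'a) \<Rightarrow> 'o \<Rightarrow> 'a \<Rightarrow> 'a set" where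
  "t1 CC F Fm A x = T1_kernel CC F Fm A #>\<^bsub>F A\<^esub> x"

definition T1m ::
  "('o,'m,'x) pcat_scheme \<Rightarrow> ('o \<Rightarrow> ('a,'b) monoid_scheme) \<Rightarrow> ('m \<Rightarrow> 'a \<Rightarrow> 'a) \<Rightarrow> 'm \<Rightarrow> 'a set \<Rightarrow> 'a set" where
  "T1m CC F Fm f c = t1 CC F Fm (Cod CC f) (Fm f (SOME a. a \<in> c))"

text \<open>Elements of Z[G] are finitely supported functions carrier G -> int;
  the augmentation ideal I(G) consists of those with coefficient sum 0,
  viewed as an abelian group under addition.\<close>
definition supp_fn :: "('a \<Rightarrow> int) \<Rightarrow> 'a set" where
  "supp_fn u = {a. u a \<noteq> 0}"

definition aug_ideal :: "('a,'b) monoid_scheme \<Rightarrow> ('a \<Rightarrow> int) monoid" where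
  "aug_ideal G = \<lparr>carrier = {u. finite (supp_fn u) \<and> supp_fn u \<subseteq> carrier G \<and>
                               (\<Sum>a\<in>supp_fn u. u a) = 0},
                  monoid.mult = (\<lambda>u v. (\<lambda>a. u a + v a)), one = (\<lambda>a. 0)\<rparr>"

definition IF :: "('o \<Rightarrow> ('a,'b) monoid_scheme) \<Rightarrow> 'o \<Rightarrow> ('a \<Rightarrow> int) monoid" where
  "IF F A = aug_ideal (F A)"

text \<open>IF(f) is the linear extension of F(f) (pushforward of coefficients)\<close>
definition IFm :: "('m \<Rightarrow> 'a \<Rightarrow> 'a) \<Rightarrow> 'm \<Rightarrow> ('a \<Rightarrow> int) \<Rightarrow> ('a \<Rightarrow> int)" where
  "IFm Fm f u = (\<lambda>b. \<Sum>a\<in>{a \<in> supp_fn u. Fm f a = b}. u a)"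

definition minus_one :: "('a,'b) monoid_scheme \<Rightarrow> 'a \<Rightarrow> ('a \<Rightarrow> int)" where
  "minus_one G x = (\<lambda>a. (if a = x then 1 else 0) - (if a = \<one>\<^bsub>G\<^esub> then 1 else 0))"

end

theory Submission
  imports Defs "HOL-Library.Function_Algebras"
begin


locale P85 =
  fixes CC :: "('o,'m) pcat" and F :: "'o \<Rightarrow> 'a monoid" and Fm :: "'m \<Rightarrow> 'a \<Rightarrow> 'a"
  assumes pc: "pointed_cat_fin_coprod CC"
    and gf: "group_functor CC F Fm"
    and red: "reduced CC F"
begin

lemma iscat: "is_cat CC" using pc by (simp add: pointed_cat_fin_coprod_def)
lemma zobj: "is_zero_obj CC (Zero CC)" using pc by (simp add: pointed_cat_fin_coprod_def)
lemma copr: "A \<in> Obj CC \<Longrightarrow> B \<in> Obj CC \<Longrightarrow> is_coproduct CC A B (Cop CC A B) (In1 CC A B) (In2 CC A B)"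
  using pc by (simp add: pointed_cat_fin_coprod_def)

lemma ms: "f \<in> mor_set CC A B \<longleftrightarrow> f \<in> Mor CC \<and> Dom CC f = A \<and> Cod CC f = B"
  by (simp add: mor_set_def)

lemma ms_obj: "f \<in> mor_set CC A B \<Longrightarrow> A \<in> Obj CC \<and> B \<in> Obj CC"
  using iscat unfolding is_cat_def ms by blast

lemma comp_ms: "f \<in> mor_set CC A B \<Longrightarrow> g \<in> mor_set CC B C \<Longrightarrow> Comp CC g f \<in> mor_set CC A C"
  using iscat unfolding is_cat_def ms by metis

lemma id_ms: "A \<in> Obj CC \<Longrightarrow> Ident CC A \<in> mor_set CC A A"
  using iscat unfolding is_cat_def by blast

lemma comp_id_r: "f \<in> mor_set CC A B \<Longrightarrow> Comp CC f (Ident CC A) = f"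
  using iscat unfolding is_cat_def ms by metis
lemma comp_id_l: "f \<in> mor_set CC A B \<Longrightarrow> Comp CC (Ident CC B) f = f"
  using iscat unfolding is_cat_def ms by metis

lemma assoc: "f \<in> mor_set CC A B \<Longrightarrow> g \<in> mor_set CC B C \<Longrightarrow> h \<in> mor_set CC C D \<Longrightarrow>
   Comp CC h (Comp CC g f) = Comp CC (Comp CC h g) f"
  using iscat unfolding is_cat_def ms by metis

lemma zero_in: "Zero CC \<in> Obj CC" using zobj by (simp add: is_zero_obj_def)

lemma cop_obj: "A \<in> Obj CC \<Longrightarrow> B \<in> Obj CC \<Longrightarrow> Cop CC A B \<in> Obj CC"
  using copr by (simp add: is_coproduct_def)
lemma in1_ms: "A \<in> Obj CC \<Longrightarrow> B \<in> Obj CC \<Longrightarrow> In1 CC A B \<in> mor_set CC A (Cop CC A B)"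
  using copr by (simp add: is_coproduct_def)
lemma in2_ms: "A \<in> Obj CC \<Longrightarrow> B \<in> Obj CC \<Longrightarrow> In2 CC A B \<in> mor_set CC B (Cop CC A B)"
  using copr by (simp add: is_coproduct_def)

lemma copair_ex: "A \<in> Obj CC \<Longrightarrow> B \<in> Obj CC \<Longrightarrow> Z \<in> Obj CC \<Longrightarrow> f \<in> mor_set CC A Z \<Longrightarrow> g \<in> mor_set CC B Z \<Longrightarrow>
   \<exists>!h. h \<in> mor_set CC (Cop CC A B) Z \<and> Comp CC h (In1 CC A B) = f \<and> Comp CC h (In2 CC A B) = g"
  using copr[of A B] unfolding is_coproduct_def by blast

lemma copair_prop: assumes "f \<in> mor_set CC A Z" "g \<in> mor_set CC B Z"
  shows "copair CC A B Z f g \<in> mor_set CC (Cop CC A B) Z \<and> Comp CC (copair CC A B Z f g) (In1 CC A B) = f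
     \<and> Comp CC (copair CC A B Z f g) (In2 CC A B) = g"
  unfolding copair_def
  by (rule theI') (use assms ms_obj copair_ex in metis)

lemma copair_unique: assumes "f \<in> mor_set CC A Z" "g \<in> mor_set CC B Z"
  and "h \<in> mor_set CC (Cop CC A B) Z" "Comp CC h (In1 CC A B) = f" "Comp CC h (In2 CC A B) = g"
  shows "h = copair CC A B Z f g"
  unfolding copair_def
  by (rule the1_equality[symmetric]) (use assms ms_obj copair_ex in metis)+

lemma to_zero: "A \<in> Obj CC \<Longrightarrow> \<exists>!f. f \<in> mor_set CC A (Zero CC)"
  using zobj unfolding is_zero_obj_def by blast
lemma from_zero: "A \<in> Obj CC \<Longrightarrow> \<exists>!f. f \<in> mor_set CC (Zero CC) A"
  using zobj unfolding is_zero_obj_def by blast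

lemma zero_mor_ms: assumes "A \<in> Obj CC" "B \<in> Obj CC" shows "zero_mor CC A B \<in> mor_set CC A B"
proof -
  have 1: "(THE f. f \<in> mor_set CC A (Zero CC)) \<in> mor_set CC A (Zero CC)" by (rule theI') (rule to_zero[OF assms(1)])
  have 2: "(THE f. f \<in> mor_set CC (Zero CC) B) \<in> mor_set CC (Zero CC) B" by (rule theI') (rule from_zero[OF assms(2)])
  show ?thesis unfolding zero_mor_def by (rule comp_ms[OF 1 2])
qed

lemma zero_mor_left: assumes "f \<in> mor_set CC A B" "C \<in> Obj CC"
  shows "Comp CC (zero_mor CC B C) f = zero_mor CC A C"
proof -
  have A: "A \<in> Obj CC" and B: "B \<in> Obj CC" using ms_obj assms by auto
  let ?tB = "THE f. f \<in> mor_set CC B (Zero CC)" and ?tA = "THE f. f \<in> mor_set CC A (Zero CC)"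
  let ?g = "THE f. f \<in> mor_set CC (Zero CC) C"
  have 1: "?tB \<in> mor_set CC B (Zero CC)" by (rule theI') (rule to_zero[OF B])
  have t1': "?tA \<in> mor_set CC A (Zero CC)" by (rule theI') (rule to_zero[OF A])
  have 2: "?g \<in> mor_set CC (Zero CC) C" by (rule theI') (rule from_zero[OF assms(2)])
  have "Comp CC ?tB f = ?tA" using comp_ms[OF assms(1) 1] t1' to_zero[OF A] by blast
  then show ?thesis unfolding zero_mor_def using assoc[OF assms(1) 1 2] by simp
qed

lemma zero_mor_right: assumes "f \<in> mor_set CC B C" "A \<in> Obj CC"
  shows "Comp CC f (zero_mor CC A B) = zero_mor CC A C"
proof -
  have C: "C \<in> Obj CC" and B: "B \<in> Obj CC" using ms_obj assms by auto
  let ?t = "THE f. f \<in> mor_set CC A (Zero CC)"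
  let ?gB = "THE f. f \<in> mor_set CC (Zero CC) B" and ?gC = "THE f. f \<in> mor_set CC (Zero CC) C"
  have 1: "?t \<in> mor_set CC A (Zero CC)" by (rule theI') (rule to_zero[OF assms(2)])
  have 2: "?gB \<in> mor_set CC (Zero CC) B" by (rule theI') (rule from_zero[OF B])
  have t2': "?gC \<in> mor_set CC (Zero CC) C" by (rule theI') (rule from_zero[OF C])
  have "Comp CC f ?gB = ?gC" using comp_ms[OF 2 assms(1)] t2' from_zero[OF C] by blast
  then show ?thesis unfolding zero_mor_def using assoc[OF 1 2 assms(1)] by simp
qed

abbreviation "P A \<equiv> Cop CC A A"
abbreviation "i1 A \<equiv> In1 CC A A"
abbreviation "i2 A \<equiv> In2 CC A A"

lemma fold_props: assumes "A \<in> Obj CC"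
  shows "fold_mor CC A \<in> mor_set CC (P A) A" "Comp CC (fold_mor CC A) (i1 A) = Ident CC A"
    "Comp CC (fold_mor CC A) (i2 A) = Ident CC A"
  using copair_prop[OF id_ms[OF assms] id_ms[OF assms]] unfolding fold_mor_def by auto

lemma retr1_props: assumes "A \<in> Obj CC"
  shows "retr1 CC A \<in> mor_set CC (P A) A" "Comp CC (retr1 CC A) (i1 A) = Ident CC A"
    "Comp CC (retr1 CC A) (i2 A) = zero_mor CC A A"
  using copair_prop[OF id_ms[OF assms] zero_mor_ms[OF assms assms]] unfolding retr1_def by auto

lemma retr2_props: assumes "A \<in> Obj CC"
  shows "retr2 CC A \<in> mor_set CC (P A) A" "Comp CC (retr2 CC A) (i1 A) = zero_mor CC A A"
    "Comp CC (retr2 CC A) (i2 A) = Ident CC A"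
  using copair_prop[OF zero_mor_ms[OF assms assms] id_ms[OF assms]] unfolding retr2_def by auto

definition ff :: "'o \<Rightarrow> 'o \<Rightarrow> 'm \<Rightarrow> 'm" where
  "ff A B f = copair CC A A (P B) (Comp CC (i1 B) f) (Comp CC (i2 B) f)"

lemma ff_props: assumes f: "f \<in> mor_set CC A B"
  shows "ff A B f \<in> mor_set CC (P A) (P B)"
    "Comp CC (fold_mor CC B) (ff A B f) = Comp CC f (fold_mor CC A)"
    "Comp CC (retr1 CC B) (ff A B f) = Comp CC f (retr1 CC A)"
    "Comp CC (retr2 CC B) (ff A B f) = Comp CC f (retr2 CC A)"
proof -
  have A: "A \<in> Obj CC" and B: "B \<in> Obj CC" using ms_obj f by auto
  have j1: "Comp CC (i1 B) f \<in> mor_set CC A (P B)" by (rule comp_ms[OF f in1_ms[OF B B]])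
  have j2: "Comp CC (i2 B) f \<in> mor_set CC A (P B)" by (rule comp_ms[OF f in2_ms[OF B B]])
  note cp = copair_prop[OF j1 j2, folded ff_def]
  show m: "ff A B f \<in> mor_set CC (P A) (P B)" using cp by simp
  note I1 = in1_ms[OF A A] and I2 = in2_ms[OF A A]
  note I1B = in1_ms[OF B B] and I2B = in2_ms[OF B B]
  have key: "\<And>r s g h. r \<in> mor_set CC (P B) B \<Longrightarrow> s \<in> mor_set CC (P A) A \<Longrightarrow>
      g \<in> mor_set CC A A \<Longrightarrow> h \<in> mor_set CC A A \<Longrightarrow>
      Comp CC r (i1 B) = g' \<Longrightarrow> Comp CC r (i2 B) = h' \<Longrightarrow>
      Comp CC s (i1 A) = g \<Longrightarrow> Comp CC s (i2 A) = h \<Longrightarrow>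
      g' \<in> mor_set CC B B \<Longrightarrow> h' \<in> mor_set CC B B \<Longrightarrow>
      Comp CC g' f = Comp CC f g \<Longrightarrow> Comp CC h' f = Comp CC f h \<Longrightarrow>
      Comp CC r (ff A B f) = Comp CC f s" for g' h'
  proof -
    fix r s g h
    assume r: "r \<in> mor_set CC (P B) B" and s: "s \<in> mor_set CC (P A) A"
      and g: "g \<in> mor_set CC A A" and h: "h \<in> mor_set CC A A"
      and r1: "Comp CC r (i1 B) = g'" and r2: "Comp CC r (i2 B) = h'"
      and s1: "Comp CC s (i1 A) = g" and s2: "Comp CC s (i2 A) = h"
      and g': "g' \<in> mor_set CC B B" and h': "h' \<in> mor_set CC B B"
      and e1: "Comp CC g' f = Comp CC f g" and e2: "Comp CC h' f = Comp CC f h"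
    have L: "Comp CC r (ff A B f) \<in> mor_set CC (P A) B" by (rule comp_ms[OF m r])
    have R: "Comp CC f s \<in> mor_set CC (P A) B" by (rule comp_ms[OF s f])
    have "Comp CC (Comp CC r (ff A B f)) (i1 A) = Comp CC r (Comp CC (ff A B f) (i1 A))"
      using assoc[OF I1 m r] by simp
    also have "\<dots> = Comp CC r (Comp CC (i1 B) f)" using cp by simp
    also have "\<dots> = Comp CC g' f" using assoc[OF f I1B r] r1 by simp
    finally have a1: "Comp CC (Comp CC r (ff A B f)) (i1 A) = Comp CC f g" using e1 by simp
    have "Comp CC (Comp CC r (ff A B f)) (i2 A) = Comp CC r (Comp CC (ff A B f) (i2 A))"
      using assoc[OF I2 m r] by simp
    also have "\<dots> = Comp CC r (Comp CC (i2 B) f)" using cp by simp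
    also have "\<dots> = Comp CC h' f" using assoc[OF f I2B r] r2 by simp
    finally have a2: "Comp CC (Comp CC r (ff A B f)) (i2 A) = Comp CC f h" using e2 by simp
    have b1: "Comp CC (Comp CC f s) (i1 A) = Comp CC f g" using assoc[OF I1 s f] s1 by simp
    have b2: "Comp CC (Comp CC f s) (i2 A) = Comp CC f h" using assoc[OF I2 s f] s2 by simp
    have fg: "Comp CC f g \<in> mor_set CC A B" by (rule comp_ms[OF g f])
    have fh: "Comp CC f h \<in> mor_set CC A B" by (rule comp_ms[OF h f])
    show "Comp CC r (ff A B f) = Comp CC f s"
      using copair_unique[OF fg fh L a1 a2] copair_unique[OF fg fh R b1 b2] by simp
  qed
  have idc: "Comp CC (Ident CC B) f = Comp CC f (Ident CC A)" using comp_id_l[OF f] comp_id_r[OF f] by simp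
  have zc: "Comp CC (zero_mor CC B B) f = Comp CC f (zero_mor CC A A)"
    using zero_mor_left[OF f B] zero_mor_right[OF f A] by simp
  note fA = fold_props[OF A] and fB = fold_props[OF B]
  note r1A = retr1_props[OF A] and r1B = retr1_props[OF B]
  note r2A = retr2_props[OF A] and r2B = retr2_props[OF B]
  show "Comp CC (fold_mor CC B) (ff A B f) = Comp CC f (fold_mor CC A)"
    by (rule key[OF fB(1) fA(1) id_ms[OF A] id_ms[OF A] fB(2) fB(3) fA(2) fA(3) id_ms[OF B] id_ms[OF B] idc idc])
  show "Comp CC (retr1 CC B) (ff A B f) = Comp CC f (retr1 CC A)"
    by (rule key[OF r1B(1) r1A(1) id_ms[OF A] zero_mor_ms[OF A A] r1B(2) r1B(3) r1A(2) r1A(3) id_ms[OF B] zero_mor_ms[OF B B] idc zc])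
  show "Comp CC (retr2 CC B) (ff A B f) = Comp CC f (retr2 CC A)"
    by (rule key[OF r2B(1) r2A(1) zero_mor_ms[OF A A] id_ms[OF A] r2B(2) r2B(3) r2A(2) r2A(3) zero_mor_ms[OF B B] id_ms[OF B] zc idc])
qed

end



context P85 begin

lemma grp: "A \<in> Obj CC \<Longrightarrow> group (F A)" using gf by (simp add: group_functor_def)

lemma ghom: assumes "f \<in> mor_set CC A B" shows "group_hom (F A) (F B) (Fm f)"
proof -
  have "Fm f \<in> hom (F A) (F B)" using gf assms unfolding group_functor_def ms by metis
  then show ?thesis using grp ms_obj[OF assms] by (simp add: group_hom_def group_hom_axioms_def)
qed

lemma Fm_comp: "f \<in> mor_set CC A B \<Longrightarrow> g \<in> mor_set CC B C \<Longrightarrow> x \<in> carrier (F A) \<Longrightarrow>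
   Fm (Comp CC g f) x = Fm g (Fm f x)"
  using gf unfolding group_functor_def ms by metis

lemma Fm_id: "A \<in> Obj CC \<Longrightarrow> x \<in> carrier (F A) \<Longrightarrow> Fm (Ident CC A) x = x"
  using gf unfolding group_functor_def by metis

lemma Fm_closed: "f \<in> mor_set CC A B \<Longrightarrow> x \<in> carrier (F A) \<Longrightarrow> Fm f x \<in> carrier (F B)"
  using ghom group_hom.hom_closed by metis
lemma Fm_mult: "f \<in> mor_set CC A B \<Longrightarrow> x \<in> carrier (F A) \<Longrightarrow> y \<in> carrier (F A) \<Longrightarrow>
   Fm f (x \<otimes>\<^bsub>F A\<^esub> y) = Fm f x \<otimes>\<^bsub>F B\<^esub> Fm f y"
  using ghom group_hom.hom_mult by metis
lemma Fm_one: "f \<in> mor_set CC A B \<Longrightarrow> Fm f \<one>\<^bsub>F A\<^esub> = \<one>\<^bsub>F B\<^esub>"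
  using ghom group_hom.hom_one by metis
lemma Fm_inv: "f \<in> mor_set CC A B \<Longrightarrow> x \<in> carrier (F A) \<Longrightarrow> Fm f (inv\<^bsub>F A\<^esub> x) = inv\<^bsub>F B\<^esub> Fm f x"
  using ghom group_hom.hom_inv by metis
lemma Fm_pow: "f \<in> mor_set CC A B \<Longrightarrow> x \<in> carrier (F A) \<Longrightarrow> Fm f (x [^]\<^bsub>F A\<^esub> (k::int)) = Fm f x [^]\<^bsub>F B\<^esub> k"
  using ghom group_hom.hom_int_pow by metis

lemma Fm_zero: assumes "A \<in> Obj CC" "B \<in> Obj CC" "x \<in> carrier (F A)"
  shows "Fm (zero_mor CC A B) x = \<one>\<^bsub>F B\<^esub>"
proof -
  let ?t = "THE f. f \<in> mor_set CC A (Zero CC)" and ?g = "THE f. f \<in> mor_set CC (Zero CC) B"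
  have 1: "?t \<in> mor_set CC A (Zero CC)" by (rule theI') (rule to_zero[OF assms(1)])
  have 2: "?g \<in> mor_set CC (Zero CC) B" by (rule theI') (rule from_zero[OF assms(2)])
  have "Fm ?t x \<in> carrier (F (Zero CC))" by (rule Fm_closed[OF 1 assms(3)])
  then have "Fm ?t x = \<one>\<^bsub>F (Zero CC)\<^esub>" using red by (simp add: reduced_def)
  then show ?thesis unfolding zero_mor_def using Fm_comp[OF 1 2 assms(3)] Fm_one[OF 2] by simp
qed

lemma fold_ms: "A \<in> Obj CC \<Longrightarrow> fold_mor CC A \<in> mor_set CC (P A) A" using fold_props by blast
lemma retr1_ms: "A \<in> Obj CC \<Longrightarrow> retr1 CC A \<in> mor_set CC (P A) A" using retr1_props by blast
lemma retr2_ms: "A \<in> Obj CC \<Longrightarrow> retr2 CC A \<in> mor_set CC (P A) A" using retr2_props by blast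
lemma i1_ms: "A \<in> Obj CC \<Longrightarrow> i1 A \<in> mor_set CC A (P A)" using in1_ms by blast
lemma i2_ms: "A \<in> Obj CC \<Longrightarrow> i2 A \<in> mor_set CC A (P A)" using in2_ms by blast

lemma fold_i1: "A \<in> Obj CC \<Longrightarrow> x \<in> carrier (F A) \<Longrightarrow> Fm (fold_mor CC A) (Fm (i1 A) x) = x"
  using Fm_comp[OF i1_ms fold_ms] fold_props Fm_id by metis
lemma fold_i2: "A \<in> Obj CC \<Longrightarrow> x \<in> carrier (F A) \<Longrightarrow> Fm (fold_mor CC A) (Fm (i2 A) x) = x"
  using Fm_comp[OF i2_ms fold_ms] fold_props Fm_id by metis
lemma r1_i1: "A \<in> Obj CC \<Longrightarrow> x \<in> carrier (F A) \<Longrightarrow> Fm (retr1 CC A) (Fm (i1 A) x) = x"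
  using Fm_comp[OF i1_ms retr1_ms] retr1_props Fm_id by metis
lemma r1_i2: "A \<in> Obj CC \<Longrightarrow> x \<in> carrier (F A) \<Longrightarrow> Fm (retr1 CC A) (Fm (i2 A) x) = \<one>\<^bsub>F A\<^esub>"
  using Fm_comp[OF i2_ms retr1_ms] retr1_props Fm_zero by metis
lemma r2_i1: "A \<in> Obj CC \<Longrightarrow> x \<in> carrier (F A) \<Longrightarrow> Fm (retr2 CC A) (Fm (i1 A) x) = \<one>\<^bsub>F A\<^esub>"
  using Fm_comp[OF i1_ms retr2_ms] retr2_props Fm_zero by metis
lemma r2_i2: "A \<in> Obj CC \<Longrightarrow> x \<in> carrier (F A) \<Longrightarrow> Fm (retr2 CC A) (Fm (i2 A) x) = x"
  using Fm_comp[OF i2_ms retr2_ms] retr2_props Fm_id by metis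

abbreviation "K A \<equiv> T1_kernel CC F Fm A"
abbreviation "T1F A \<equiv> T1 CC F Fm A"
abbreviation "t1F A \<equiv> t1 CC F Fm A"

lemma cr2_normal: assumes A: "A \<in> Obj CC" shows "cr2 CC F Fm A \<lhd> F (P A)"
proof -
  interpret G: group "F (P A)" using grp cop_obj A by blast
  interpret GA: group "F A" using grp A by blast
  note r1 = retr1_ms[OF A] and r2 = retr2_ms[OF A]
  have sub: "subgroup (cr2 CC F Fm A) (F (P A))"
  proof (rule G.subgroupI)
    show "cr2 CC F Fm A \<subseteq> carrier (F (P A))" by (auto simp: cr2_def)
    show "cr2 CC F Fm A \<noteq> {}" using Fm_one[OF r1] Fm_one[OF r2] by (auto simp: cr2_def)
    show "inv\<^bsub>F (P A)\<^esub> a \<in> cr2 CC F Fm A" if "a \<in> cr2 CC F Fm A" for a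
      using that Fm_inv[OF r1] Fm_inv[OF r2] by (auto simp: cr2_def)
    show "a \<otimes>\<^bsub>F (P A)\<^esub> b \<in> cr2 CC F Fm A" if "a \<in> cr2 CC F Fm A" "b \<in> cr2 CC F Fm A" for a b
      using that Fm_mult[OF r1] Fm_mult[OF r2] by (auto simp: cr2_def)
  qed
  show ?thesis
  proof (subst G.normal_inv_iff, intro conjI sub ballI)
    fix x h assume x: "x \<in> carrier (F (P A))" and h: "h \<in> cr2 CC F Fm A"
    then have hc: "h \<in> carrier (F (P A))" by (simp add: cr2_def)
    show "x \<otimes>\<^bsub>F (P A)\<^esub> h \<otimes>\<^bsub>F (P A)\<^esub> inv\<^bsub>F (P A)\<^esub> x \<in> cr2 CC F Fm A"
      using h x hc Fm_closed[OF r1 x] Fm_closed[OF r2 x]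
      by (simp add: cr2_def Fm_mult[OF r1] Fm_mult[OF r2] Fm_inv[OF r1] Fm_inv[OF r2])
  qed
qed

lemma Kmem: "a \<in> K A \<longleftrightarrow> (\<exists>z\<in>cr2 CC F Fm A. a = Fm (fold_mor CC A) z)"
  by (simp add: T1_kernel_def image_iff)

lemma K_normal: assumes A: "A \<in> Obj CC" shows "K A \<lhd> F A"
proof -
  interpret G: group "F (P A)" using grp cop_obj A by blast
  interpret GA: group "F A" using grp A by blast
  interpret N: normal "cr2 CC F Fm A" "F (P A)" using cr2_normal[OF A] .
  note fo = fold_ms[OF A]
  have sub: "subgroup (K A) (F A)"
  proof (rule GA.subgroupI)
    show "K A \<subseteq> carrier (F A)" using Fm_closed[OF fo] N.subset unfolding T1_kernel_def by blast
    show "K A \<noteq> {}" using N.one_closed unfolding T1_kernel_def by blast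
    show "inv\<^bsub>F A\<^esub> a \<in> K A" if ha: "a \<in> K A" for a
    proof -
      obtain z where z: "z \<in> cr2 CC F Fm A" "a = Fm (fold_mor CC A) z" using ha Kmem by meson
      then have "inv\<^bsub>F A\<^esub> a = Fm (fold_mor CC A) (inv\<^bsub>F (P A)\<^esub> z)" by (simp add: Fm_inv[OF fo] subsetD[OF N.subset z(1)])
      then show ?thesis using N.m_inv_closed[OF z(1)] Kmem by meson
    qed
    show "a \<otimes>\<^bsub>F A\<^esub> b \<in> K A" if ha: "a \<in> K A" and hb: "b \<in> K A" for a b
    proof -
      obtain z where z: "z \<in> cr2 CC F Fm A" "a = Fm (fold_mor CC A) z" using ha Kmem by meson
      obtain w where w: "w \<in> cr2 CC F Fm A" "b = Fm (fold_mor CC A) w" using hb Kmem by meson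
      have "a \<otimes>\<^bsub>F A\<^esub> b = Fm (fold_mor CC A) (z \<otimes>\<^bsub>F (P A)\<^esub> w)" by (simp add: z(2) w(2) Fm_mult[OF fo] subsetD[OF N.subset z(1)] subsetD[OF N.subset w(1)])
      then show ?thesis using N.m_closed[OF z(1) w(1)] Kmem by meson
    qed
  qed
  show ?thesis
  proof (subst GA.normal_inv_iff, intro conjI sub ballI)
    fix x h assume x: "x \<in> carrier (F A)" and h: "h \<in> K A"
    then obtain z where z: "z \<in> cr2 CC F Fm A" "h = Fm (fold_mor CC A) z" using Kmem by meson
    have zc: "z \<in> carrier (F (P A))" using z N.subset by auto
    have y: "Fm (i1 A) x \<in> carrier (F (P A))" using Fm_closed[OF i1_ms[OF A] x] .
    have "Fm (i1 A) x \<otimes>\<^bsub>F (P A)\<^esub> z \<otimes>\<^bsub>F (P A)\<^esub> inv\<^bsub>F (P A)\<^esub> Fm (i1 A) x \<in> cr2 CC F Fm A"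
      using N.inv_op_closed2[OF y z(1)] .
    moreover have "Fm (fold_mor CC A) (Fm (i1 A) x \<otimes>\<^bsub>F (P A)\<^esub> z \<otimes>\<^bsub>F (P A)\<^esub> inv\<^bsub>F (P A)\<^esub> Fm (i1 A) x)
       = x \<otimes>\<^bsub>F A\<^esub> h \<otimes>\<^bsub>F A\<^esub> inv\<^bsub>F A\<^esub> x"
      using y zc x z(2) by (simp add: Fm_mult[OF fo] Fm_inv[OF fo] fold_i1[OF A])
    ultimately show "x \<otimes>\<^bsub>F A\<^esub> h \<otimes>\<^bsub>F A\<^esub> inv\<^bsub>F A\<^esub> x \<in> K A"
      unfolding T1_kernel_def by (metis image_eqI)
  qed
qed

lemma comm_in_K: assumes A: "A \<in> Obj CC" and x: "x \<in> carrier (F A)" and y: "y \<in> carrier (F A)"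
  shows "x \<otimes>\<^bsub>F A\<^esub> y \<otimes>\<^bsub>F A\<^esub> inv\<^bsub>F A\<^esub> x \<otimes>\<^bsub>F A\<^esub> inv\<^bsub>F A\<^esub> y \<in> K A"
proof -
  interpret G: group "F (P A)" using grp cop_obj A by blast
  interpret GA: group "F A" using grp A by blast
  note fo = fold_ms[OF A] and r1 = retr1_ms[OF A] and r2 = retr2_ms[OF A]
  define a where "a = Fm (i1 A) x"
  define b where "b = Fm (i2 A) y"
  have a: "a \<in> carrier (F (P A))" unfolding a_def using Fm_closed[OF i1_ms[OF A] x] .
  have b: "b \<in> carrier (F (P A))" unfolding b_def using Fm_closed[OF i2_ms[OF A] y] .
  define c where "c = a \<otimes>\<^bsub>F (P A)\<^esub> b \<otimes>\<^bsub>F (P A)\<^esub> inv\<^bsub>F (P A)\<^esub> a \<otimes>\<^bsub>F (P A)\<^esub> inv\<^bsub>F (P A)\<^esub> b"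
  have "c \<in> cr2 CC F Fm A" unfolding cr2_def c_def using a b x y
    by (simp add: Fm_mult[OF r1] Fm_mult[OF r2] Fm_inv[OF r1] Fm_inv[OF r2])
      (simp add: a_def b_def r1_i1[OF A] r1_i2[OF A] r2_i1[OF A] r2_i2[OF A] x y)
  moreover have "Fm (fold_mor CC A) c = x \<otimes>\<^bsub>F A\<^esub> y \<otimes>\<^bsub>F A\<^esub> inv\<^bsub>F A\<^esub> x \<otimes>\<^bsub>F A\<^esub> inv\<^bsub>F A\<^esub> y"
    unfolding c_def using a b
    by (simp add: Fm_mult[OF fo] Fm_inv[OF fo]) (simp add: a_def b_def fold_i1[OF A] fold_i2[OF A] x y)
  ultimately show ?thesis unfolding Kmem by metis
qed

end



context P85 begin

lemma T1_group: "A \<in> Obj CC \<Longrightarrow> group (T1F A)"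
  unfolding T1_def by (rule normal.factorgroup_is_group[OF K_normal])

lemma t1_carr: "a \<in> carrier (F A) \<Longrightarrow> t1F A a \<in> carrier (T1F A)"
  unfolding T1_def t1_def carrier_FactGroup by blast

lemma t1_mult: "A \<in> Obj CC \<Longrightarrow> a \<in> carrier (F A) \<Longrightarrow> b \<in> carrier (F A) \<Longrightarrow>
  t1F A (a \<otimes>\<^bsub>F A\<^esub> b) = t1F A a \<otimes>\<^bsub>T1F A\<^esub> t1F A b"
  unfolding T1_def t1_def mult_FactGroup using normal.rcos_sum[OF K_normal] by metis

lemma t1_one: "A \<in> Obj CC \<Longrightarrow> t1F A \<one>\<^bsub>F A\<^esub> = \<one>\<^bsub>T1F A\<^esub>"
  unfolding T1_def t1_def one_FactGroup
  using group.coset_mult_one[OF grp] normal_imp_subgroup[OF K_normal] subgroup.subset by metis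

lemma t1_pow: "A \<in> Obj CC \<Longrightarrow> a \<in> carrier (F A) \<Longrightarrow>
  t1F A (a [^]\<^bsub>F A\<^esub> (k::int)) = t1F A a [^]\<^bsub>T1F A\<^esub> k"
  unfolding T1_def t1_def using normal.FactGroup_int_pow[OF K_normal] by metis

lemma t1_eq_one: assumes "A \<in> Obj CC" "a \<in> carrier (F A)"
  shows "t1F A a = \<one>\<^bsub>T1F A\<^esub> \<longleftrightarrow> a \<in> K A"
  unfolding T1_def t1_def one_FactGroup
  using group.coset_join1[OF grp[OF assms(1)] _ assms(2) normal_imp_subgroup[OF K_normal[OF assms(1)]]]
    group.coset_join2[OF grp[OF assms(1)] assms(2) normal_imp_subgroup[OF K_normal[OF assms(1)]]]
  by blast

lemma t1_surj: "c \<in> carrier (T1F A) \<Longrightarrow> \<exists>a\<in>carrier (F A). c = t1F A a"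
  unfolding T1_def t1_def carrier_FactGroup by blast

lemma T1_comm: assumes A: "A \<in> Obj CC" shows "comm_group (T1F A)"
proof (rule group.group_comm_groupI[OF T1_group[OF A]])
  interpret GA: group "F A" using grp A by blast
  interpret N: normal "K A" "F A" using K_normal[OF A] .
  fix x y assume "x \<in> carrier (T1F A)" "y \<in> carrier (T1F A)"
  then obtain a b where a: "a \<in> carrier (F A)" "x = t1F A a" and b: "b \<in> carrier (F A)" "y = t1F A b"
    using t1_surj by meson
  have ab: "a \<otimes>\<^bsub>F A\<^esub> b \<in> carrier (F A)" "b \<otimes>\<^bsub>F A\<^esub> a \<in> carrier (F A)" using a b by auto
  have "(a \<otimes>\<^bsub>F A\<^esub> b) \<otimes>\<^bsub>F A\<^esub> inv\<^bsub>F A\<^esub> (b \<otimes>\<^bsub>F A\<^esub> a) = a \<otimes>\<^bsub>F A\<^esub> b \<otimes>\<^bsub>F A\<^esub> inv\<^bsub>F A\<^esub> a \<otimes>\<^bsub>F A\<^esub> inv\<^bsub>F A\<^esub> b"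
    using a b by (simp add: GA.inv_mult_group GA.m_assoc)
  then have "(a \<otimes>\<^bsub>F A\<^esub> b) \<otimes>\<^bsub>F A\<^esub> inv\<^bsub>F A\<^esub> (b \<otimes>\<^bsub>F A\<^esub> a) \<in> K A"
    using comm_in_K[OF A a(1) b(1)] by simp
  then have "a \<otimes>\<^bsub>F A\<^esub> b \<in> K A #>\<^bsub>F A\<^esub> (b \<otimes>\<^bsub>F A\<^esub> a)"
    using N.rcos_module[OF GA.is_group ab(2) ab(1)] by simp
  then have "K A #>\<^bsub>F A\<^esub> (b \<otimes>\<^bsub>F A\<^esub> a) = K A #>\<^bsub>F A\<^esub> (a \<otimes>\<^bsub>F A\<^esub> b)"
    using GA.repr_independence[OF _ ab(2) N.subgroup_axioms] by blast
  then show "x \<otimes>\<^bsub>T1F A\<^esub> y = y \<otimes>\<^bsub>T1F A\<^esub> x"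
    using a b t1_mult[OF A a(1) b(1)] t1_mult[OF A b(1) a(1)] by (simp add: t1_def)
qed

lemma K_map: assumes f: "f \<in> mor_set CC A B" and k: "k \<in> K A" shows "Fm f k \<in> K B"
proof -
  have A: "A \<in> Obj CC" and B: "B \<in> Obj CC" using ms_obj f by auto
  obtain z where z: "z \<in> cr2 CC F Fm A" "k = Fm (fold_mor CC A) z" using k Kmem by meson
  have zc: "z \<in> carrier (F (P A))" using z by (simp add: cr2_def)
  note fp = ff_props[OF f]
  have e1: "Fm f k = Fm (fold_mor CC B) (Fm (ff A B f) z)"
    using z(2) Fm_comp[OF fold_ms[OF A] f zc] Fm_comp[OF fp(1) fold_ms[OF B] zc] fp(2) by simp
  have "Fm (retr1 CC B) (Fm (ff A B f) z) = Fm f (Fm (retr1 CC A) z)"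
    using Fm_comp[OF retr1_ms[OF A] f zc] Fm_comp[OF fp(1) retr1_ms[OF B] zc] fp(3) by simp
  also have "\<dots> = \<one>\<^bsub>F B\<^esub>" using z Fm_one[OF f] by (simp add: cr2_def)
  finally have r1: "Fm (retr1 CC B) (Fm (ff A B f) z) = \<one>\<^bsub>F B\<^esub>" .
  have "Fm (retr2 CC B) (Fm (ff A B f) z) = Fm f (Fm (retr2 CC A) z)"
    using Fm_comp[OF retr2_ms[OF A] f zc] Fm_comp[OF fp(1) retr2_ms[OF B] zc] fp(4) by simp
  also have "\<dots> = \<one>\<^bsub>F B\<^esub>" using z Fm_one[OF f] by (simp add: cr2_def)
  finally have r2: "Fm (retr2 CC B) (Fm (ff A B f) z) = \<one>\<^bsub>F B\<^esub>" .
  have "Fm (ff A B f) z \<in> cr2 CC F Fm B" unfolding cr2_def using r1 r2 Fm_closed[OF fp(1) zc] by simp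
  then show ?thesis using e1 Kmem by meson
qed

lemma cod: "f \<in> mor_set CC A B \<Longrightarrow> Cod CC f = B" by (simp add: ms)
lemma dom: "f \<in> mor_set CC A B \<Longrightarrow> Dom CC f = A" by (simp add: ms)

lemma T1m_t1: assumes f: "f \<in> mor_set CC A B" and a: "a \<in> carrier (F A)"
  shows "T1m CC F Fm f (t1F A a) = t1F B (Fm f a)"
proof -
  have A: "A \<in> Obj CC" and B: "B \<in> Obj CC" using ms_obj f by auto
  interpret GA: group "F A" using grp A by blast
  interpret N: normal "K A" "F A" using K_normal[OF A] .
  let ?s = "SOME x. x \<in> t1F A a"
  have "a \<in> t1F A a" unfolding t1_def by (rule GA.rcos_self[OF a N.subgroup_axioms])
  then have "?s \<in> K A #>\<^bsub>F A\<^esub> a" unfolding t1_def by (rule someI)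
  then obtain k where k: "k \<in> K A" "?s = k \<otimes>\<^bsub>F A\<^esub> a" unfolding r_coset_def by blast
  have kc: "k \<in> carrier (F A)" using k N.subset by blast
  have "T1m CC F Fm f (t1F A a) = t1F B (Fm f k \<otimes>\<^bsub>F B\<^esub> Fm f a)"
    unfolding T1m_def cod[OF f] k(2) using Fm_mult[OF f kc a] by simp
  also have "\<dots> = t1F B (Fm f k) \<otimes>\<^bsub>T1F B\<^esub> t1F B (Fm f a)"
    by (rule t1_mult[OF B Fm_closed[OF f kc] Fm_closed[OF f a]])
  also have "\<dots> = t1F B (Fm f a)"
    using t1_eq_one[OF B Fm_closed[OF f kc]] K_map[OF f k(1)] monoid.l_one[OF group.is_monoid[OF T1_group[OF B]] t1_carr[OF Fm_closed[OF f a]]]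
    by simp
  finally show ?thesis .
qed

lemma T1m_closed: assumes f: "f \<in> mor_set CC A B" and c: "c \<in> carrier (T1F A)"
  shows "T1m CC F Fm f c \<in> carrier (T1F B)"
  using t1_surj[OF c] T1m_t1[OF f] t1_carr Fm_closed[OF f] by metis

lemma T1m_mult: assumes f: "f \<in> mor_set CC A B" and c: "c \<in> carrier (T1F A)" and d: "d \<in> carrier (T1F A)"
  shows "T1m CC F Fm f (c \<otimes>\<^bsub>T1F A\<^esub> d) = T1m CC F Fm f c \<otimes>\<^bsub>T1F B\<^esub> T1m CC F Fm f d"
proof -
  have A: "A \<in> Obj CC" and B: "B \<in> Obj CC" using ms_obj f by auto
  obtain a where a: "a \<in> carrier (F A)" "c = t1F A a" using t1_surj[OF c] by blast
  obtain b where b: "b \<in> carrier (F A)" "d = t1F A b" using t1_surj[OF d] by blast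
  have ab: "a \<otimes>\<^bsub>F A\<^esub> b \<in> carrier (F A)" using a b group.subgroup_self[OF grp[OF A]] subgroup.m_closed by metis
  show ?thesis
    using a b t1_mult[OF A a(1) b(1)] T1m_t1[OF f ab] T1m_t1[OF f a(1)] T1m_t1[OF f b(1)]
      Fm_mult[OF f a(1) b(1)] t1_mult[OF B Fm_closed[OF f a(1)] Fm_closed[OF f b(1)]] by simp
qed

lemma T1m_pow: assumes f: "f \<in> mor_set CC A B" and c: "c \<in> carrier (T1F A)"
  shows "T1m CC F Fm f (c [^]\<^bsub>T1F A\<^esub> (k::int)) = T1m CC F Fm f c [^]\<^bsub>T1F B\<^esub> k"
proof -
  have A: "A \<in> Obj CC" and B: "B \<in> Obj CC" using ms_obj f by auto
  obtain a where a: "a \<in> carrier (F A)" "c = t1F A a" using t1_surj[OF c] by blast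
  have ak: "a [^]\<^bsub>F A\<^esub> k \<in> carrier (F A)" using group.int_pow_closed[OF grp[OF A] a(1)] .
  show ?thesis
    using a t1_pow[OF A a(1)] T1m_t1[OF f ak] T1m_t1[OF f a(1)] Fm_pow[OF f a(1)]
      t1_pow[OF B Fm_closed[OF f a(1)]] by simp
qed

lemma T1m_one: assumes f: "f \<in> mor_set CC A B"
  shows "T1m CC F Fm f \<one>\<^bsub>T1F A\<^esub> = \<one>\<^bsub>T1F B\<^esub>"
proof -
  have A: "A \<in> Obj CC" and B: "B \<in> Obj CC" using ms_obj f by auto
  show ?thesis using t1_one[OF A, symmetric] T1m_t1[OF f monoid.one_closed[OF group.is_monoid[OF grp[OF A]]]] Fm_one[OF f] t1_one[OF B]
    by simp
qed

lemma T1m_finprod: assumes f: "f \<in> mor_set CC A B" and S: "finite S" and g: "g \<in> S \<rightarrow> carrier (T1F A)"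
  shows "T1m CC F Fm f (finprod (T1F A) g S) = finprod (T1F B) (\<lambda>s. T1m CC F Fm f (g s)) S"
proof -
  have A: "A \<in> Obj CC" and B: "B \<in> Obj CC" using ms_obj f by auto
  interpret TA: comm_group "T1F A" using T1_comm[OF A] .
  interpret TB: comm_group "T1F B" using T1_comm[OF B] .
  show ?thesis using S g
  proof (induction S rule: finite_induct)
    case empty
    then show ?case using T1m_one[OF f] by simp
  next
    case (insert s S)
    then have gs: "g s \<in> carrier (T1F A)" and gS: "g \<in> S \<rightarrow> carrier (T1F A)" by auto
    have h: "(\<lambda>s. T1m CC F Fm f (g s)) \<in> S \<rightarrow> carrier (T1F B)" using gS T1m_closed[OF f] by auto
    show ?case using insert gs gS h T1m_closed[OF f gs]
      by (simp add: T1m_mult[OF f gs TA.finprod_closed[OF gS]])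
  qed
qed

end



definition dl :: "'a \<Rightarrow> 'a \<Rightarrow> int" where "dl x = (\<lambda>a. if a = x then 1 else 0)"

lemma supp_dl[simp]: "supp_fn (dl x) = {x}" by (auto simp: supp_fn_def dl_def)
lemma supp_add: "supp_fn (u + v) \<subseteq> supp_fn u \<union> supp_fn v" by (auto simp: supp_fn_def)
lemma supp_neg[simp]: "supp_fn (- u) = supp_fn u" by (auto simp: supp_fn_def)
lemma supp_zero[simp]: "supp_fn (0::'a\<Rightarrow>int) = {}" by (auto simp: supp_fn_def)
lemma supp_smul: "supp_fn (\<lambda>y. c * u y) \<subseteq> supp_fn u" by (auto simp: supp_fn_def)

lemma sum_supp: "finite S \<Longrightarrow> supp_fn u \<subseteq> S \<Longrightarrow> sum u (supp_fn u) = sum u S"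
  by (rule sum.mono_neutral_left) (auto simp: supp_fn_def)

lemma IFm_S: assumes "finite S" "supp_fn u \<subseteq> S"
  shows "IFm Fm f u b = (\<Sum>a\<in>S. if Fm f a = b then u a else 0)"
proof -
  have fs: "finite (supp_fn u)" using assms finite_subset by blast
  have "IFm Fm f u b = (\<Sum>a\<in>supp_fn u. if Fm f a = b then u a else 0)"
    unfolding IFm_def by (rule sum.inter_filter[OF fs])
  also have "\<dots> = (\<Sum>a\<in>S. if Fm f a = b then u a else 0)"
    by (rule sum.mono_neutral_left[OF assms(1) assms(2)]) (auto simp: supp_fn_def)
  finally show ?thesis .
qed

lemma IFm_add: assumes "finite (supp_fn u)" "finite (supp_fn v)"
  shows "IFm Fm f (u + v) = IFm Fm f u + IFm Fm f v"
proof
  fix b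
  let ?S = "supp_fn u \<union> supp_fn v"
  have fS: "finite ?S" using assms by simp
  have "IFm Fm f (u + v) b = (\<Sum>a\<in>?S. if Fm f a = b then (u + v) a else 0)"
    by (rule IFm_S[OF fS supp_add])
  also have "\<dots> = (\<Sum>a\<in>?S. (if Fm f a = b then u a else 0) + (if Fm f a = b then v a else 0))"
    by (rule sum.cong) auto
  also have "\<dots> = IFm Fm f u b + IFm Fm f v b"
    by (simp add: sum.distrib IFm_S[OF fS, of u] IFm_S[OF fS, of v])
  finally show "IFm Fm f (u + v) b = (IFm Fm f u + IFm Fm f v) b" by simp
qed

lemma IFm_zero[simp]: "IFm Fm f 0 = 0"
  unfolding IFm_def by (rule ext) simp

lemma IFm_neg: assumes "finite (supp_fn u)" shows "IFm Fm f (- u) = - IFm Fm f u"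
proof -
  have "IFm Fm f (u + - u) = IFm Fm f u + IFm Fm f (- u)" by (rule IFm_add) (use assms in simp_all)
  then have "IFm Fm f u + IFm Fm f (- u) = 0" by simp
  then show ?thesis by (simp add: add_eq_0_iff2)
qed

lemma IFm_diff: assumes "finite (supp_fn u)" "finite (supp_fn v)"
  shows "IFm Fm f (u - v) = IFm Fm f u - IFm Fm f v"
proof -
  have "IFm Fm f (u - v) = IFm Fm f (u + - v)" by simp
  also have "\<dots> = IFm Fm f u + IFm Fm f (- v)" by (rule IFm_add) (use assms in simp_all)
  also have "\<dots> = IFm Fm f u - IFm Fm f v" using IFm_neg[OF assms(2)] by simp
  finally show ?thesis .
qed

lemma IFm_smul_dl: "IFm Fm f (\<lambda>y. c * dl x y) = (\<lambda>y. c * dl (Fm f x) y)"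
proof
  fix b
  have s: "supp_fn (\<lambda>y. c * dl x y) \<subseteq> {x}" using supp_smul[of c "dl x"] by simp
  show "IFm Fm f (\<lambda>y. c * dl x y) b = c * dl (Fm f x) b"
    using IFm_S[OF _ s, of Fm f b] by (simp add: dl_def)
qed

lemma IFm_dl: "IFm Fm f (dl x) = dl (Fm f x)"
  using IFm_smul_dl[of Fm f 1 x] by simp

lemma supp_IFm: assumes "finite (supp_fn u)" shows "supp_fn (IFm Fm f u) \<subseteq> Fm f ` supp_fn u"
proof
  fix b assume "b \<in> supp_fn (IFm Fm f u)"
  then have "IFm Fm f u b \<noteq> 0" by (simp add: supp_fn_def)
  then have "{a \<in> supp_fn u. Fm f a = b} \<noteq> {}" unfolding IFm_def by (metis sum.empty)
  then show "b \<in> Fm f ` supp_fn u" by blast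
qed

lemma fin_IFm: "finite (supp_fn u) \<Longrightarrow> finite (supp_fn (IFm Fm f u))"
  by (rule finite_subset[OF supp_IFm finite_imageI])

lemma sum_IFm: assumes fs: "finite (supp_fn u)"
  shows "sum (IFm Fm f u) (supp_fn (IFm Fm f u)) = sum u (supp_fn u)"
proof -
  let ?S = "supp_fn u" let ?T = "Fm f ` supp_fn u"
  have "sum (IFm Fm f u) (supp_fn (IFm Fm f u)) = sum (IFm Fm f u) ?T"
    by (rule sum_supp[OF finite_imageI[OF fs] supp_IFm[OF fs]])
  also have "\<dots> = (\<Sum>b\<in>?T. \<Sum>a\<in>?S. if Fm f a = b then u a else 0)"
    by (rule sum.cong[OF refl]) (rule IFm_S[OF fs subset_refl])
  also have "\<dots> = (\<Sum>a\<in>?S. \<Sum>b\<in>?T. if Fm f a = b then u a else 0)"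
    by (rule sum.swap)
  also have "\<dots> = (\<Sum>a\<in>?S. u a)"
    by (rule sum.cong[OF refl]) (use fs in simp)
  finally show ?thesis .
qed

lemma IFc: "u \<in> carrier (IF F A) \<longleftrightarrow> finite (supp_fn u) \<and> supp_fn u \<subseteq> carrier (F A) \<and> sum u (supp_fn u) = 0"
  by (simp add: IF_def aug_ideal_def)

lemma IF_mult[simp]: "u \<otimes>\<^bsub>IF F A\<^esub> v = u + v"
  by (simp add: IF_def aug_ideal_def plus_fun_def)
lemma IF_one[simp]: "\<one>\<^bsub>IF F A\<^esub> = 0"
  by (simp add: IF_def aug_ideal_def zero_fun_def)

lemma IF_add_closed: assumes "u \<in> carrier (IF F A)" "v \<in> carrier (IF F A)" shows "u + v \<in> carrier (IF F A)"
proof -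
  let ?S = "supp_fn u \<union> supp_fn v"
  have f: "finite ?S" using assms by (simp add: IFc)
  have "sum (u + v) (supp_fn (u + v)) = sum (u + v) ?S" by (rule sum_supp[OF f supp_add])
  also have "\<dots> = sum u ?S + sum v ?S" by (simp add: sum.distrib)
  also have "\<dots> = 0" using assms sum_supp[OF f, of u] sum_supp[OF f, of v] by (simp add: IFc)
  finally show ?thesis using assms supp_add[of u v] finite_subset[OF supp_add f] by (auto simp: IFc)
qed

lemma IF_neg_closed: assumes "u \<in> carrier (IF F A)" shows "- u \<in> carrier (IF F A)"
  using assms by (simp add: IFc sum_negf)

lemma IF_zero_closed: "0 \<in> carrier (IF F A)" by (simp add: IFc)

lemma IF_comm_group: "comm_group (IF F A)"
proof (rule comm_groupI)
  show "\<exists>y\<in>carrier (IF F A). y \<otimes>\<^bsub>IF F A\<^esub> x = \<one>\<^bsub>IF F A\<^esub>" if "x \<in> carrier (IF F A)" for x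
    using IF_neg_closed[OF that] by (intro bexI[of _ "- x"]) simp_all
qed (auto simp: IF_add_closed IF_zero_closed add.assoc add.commute)

lemma IF_diff_closed: "u \<in> carrier (IF F A) \<Longrightarrow> v \<in> carrier (IF F A) \<Longrightarrow> u - v \<in> carrier (IF F A)"
  using IF_add_closed IF_neg_closed by (metis diff_conv_add_uminus)

lemma dl_diff_carr: "x \<in> carrier (F A) \<Longrightarrow> y \<in> carrier (F A) \<Longrightarrow> dl x - dl y \<in> carrier (IF F A)"
proof -
  assume x: "x \<in> carrier (F A)" and y: "y \<in> carrier (F A)"
  have s: "supp_fn (dl x - dl y) \<subseteq> {x, y}" by (auto simp: supp_fn_def dl_def)
  have "sum (dl x - dl y) (supp_fn (dl x - dl y)) = sum (dl x - dl y) {x, y}"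
    by (rule sum_supp[OF _ s]) simp
  also have "\<dots> = 0" by (cases "x = y") (simp_all add: dl_def)
  finally show ?thesis using s x y finite_subset[OF s] by (auto simp: IFc)
qed

lemma minus_one_dl: "minus_one G x = dl x - dl \<one>\<^bsub>G\<^esub>"
  by (simp add: minus_one_def dl_def fun_eq_iff)




context P85 begin

definition Psi :: "'o \<Rightarrow> ('a \<Rightarrow> int) \<Rightarrow> 'a set" where
  "Psi A u = finprod (T1F A) (\<lambda>a. t1F A a [^]\<^bsub>T1F A\<^esub> u a) (supp_fn u)"

definition V :: "'o \<Rightarrow> ('a \<Rightarrow> int) \<Rightarrow> bool" where
  "V A u \<longleftrightarrow> finite (supp_fn u) \<and> supp_fn u \<subseteq> carrier (F A)"

lemma pw_carr: "A \<in> Obj CC \<Longrightarrow> a \<in> carrier (F A) \<Longrightarrow> t1F A a [^]\<^bsub>T1F A\<^esub> (k::int) \<in> carrier (T1F A)"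
  using group.int_pow_closed[OF T1_group t1_carr] by blast

lemma Psi_S: assumes A: "A \<in> Obj CC" and fS: "finite S" and s: "supp_fn u \<subseteq> S" and S: "S \<subseteq> carrier (F A)"
  shows "Psi A u = finprod (T1F A) (\<lambda>a. t1F A a [^]\<^bsub>T1F A\<^esub> u a) S"
proof -
  interpret TA: comm_group "T1F A" using T1_comm[OF A] .
  show ?thesis unfolding Psi_def
    by (rule TA.finprod_mono_neutral_cong_left[OF fS s]) (auto simp: supp_fn_def intro!: pw_carr[OF A] dest: subsetD[OF S])
qed

lemma Psi_closed: assumes A: "A \<in> Obj CC" and u: "V A u" shows "Psi A u \<in> carrier (T1F A)"
proof -
  interpret TA: comm_group "T1F A" using T1_comm[OF A] .
  show ?thesis unfolding Psi_def using u by (auto simp: V_def intro!: TA.finprod_closed pw_carr[OF A])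
qed

lemma Psi_add: assumes A: "A \<in> Obj CC" and u: "V A u" and v: "V A v"
  shows "Psi A (u + v) = Psi A u \<otimes>\<^bsub>T1F A\<^esub> Psi A v"
proof -
  interpret TA: comm_group "T1F A" using T1_comm[OF A] .
  let ?S = "supp_fn u \<union> supp_fn v"
  have fS: "finite ?S" and S: "?S \<subseteq> carrier (F A)" using u v by (auto simp: V_def)
  have pu: "(\<lambda>a. t1F A a [^]\<^bsub>T1F A\<^esub> u a) \<in> ?S \<rightarrow> carrier (T1F A)"
  proof (rule Pi_I)
    fix a assume "a \<in> ?S" then have "a \<in> carrier (F A)" using S by blast
    then show "t1F A a [^]\<^bsub>T1F A\<^esub> u a \<in> carrier (T1F A)" by (rule pw_carr[OF A])
  qed
  have pv: "(\<lambda>a. t1F A a [^]\<^bsub>T1F A\<^esub> v a) \<in> ?S \<rightarrow> carrier (T1F A)"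
  proof (rule Pi_I)
    fix a assume "a \<in> ?S" then have "a \<in> carrier (F A)" using S by blast
    then show "t1F A a [^]\<^bsub>T1F A\<^esub> v a \<in> carrier (T1F A)" by (rule pw_carr[OF A])
  qed
  have puv: "(\<lambda>a. t1F A a [^]\<^bsub>T1F A\<^esub> u a \<otimes>\<^bsub>T1F A\<^esub> t1F A a [^]\<^bsub>T1F A\<^esub> v a) \<in> ?S \<rightarrow> carrier (T1F A)"
    using pu pv by (auto intro!: TA.m_closed)
  have "Psi A (u + v) = finprod (T1F A) (\<lambda>a. t1F A a [^]\<^bsub>T1F A\<^esub> (u + v) a) ?S"
    by (rule Psi_S[OF A fS supp_add S])
  also have "\<dots> = finprod (T1F A) (\<lambda>a. t1F A a [^]\<^bsub>T1F A\<^esub> u a \<otimes>\<^bsub>T1F A\<^esub> t1F A a [^]\<^bsub>T1F A\<^esub> v a) ?S"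
  proof (rule TA.finprod_cong'[OF refl puv])
    fix a assume "a \<in> ?S" then have "a \<in> carrier (F A)" using S by blast
    then show "t1F A a [^]\<^bsub>T1F A\<^esub> (u + v) a = t1F A a [^]\<^bsub>T1F A\<^esub> u a \<otimes>\<^bsub>T1F A\<^esub> t1F A a [^]\<^bsub>T1F A\<^esub> v a"
      using TA.int_pow_mult[OF t1_carr] by simp
  qed
  also have "\<dots> = finprod (T1F A) (\<lambda>a. t1F A a [^]\<^bsub>T1F A\<^esub> u a) ?S \<otimes>\<^bsub>T1F A\<^esub> finprod (T1F A) (\<lambda>a. t1F A a [^]\<^bsub>T1F A\<^esub> v a) ?S"
    by (rule TA.finprod_multf[OF pu pv])
  also have "\<dots> = Psi A u \<otimes>\<^bsub>T1F A\<^esub> Psi A v"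
    using Psi_S[OF A fS _ S, of u] Psi_S[OF A fS _ S, of v] by simp
  finally show ?thesis .
qed

lemma Psi_zero: assumes A: "A \<in> Obj CC" shows "Psi A 0 = \<one>\<^bsub>T1F A\<^esub>"
proof -
  interpret TA: comm_group "T1F A" using T1_comm[OF A] .
  show ?thesis unfolding Psi_def by simp
qed

lemma Psi_smul_dl: assumes A: "A \<in> Obj CC" and a: "a \<in> carrier (F A)"
  shows "Psi A (\<lambda>y. c * dl a y) = t1F A a [^]\<^bsub>T1F A\<^esub> c"
proof -
  interpret TA: comm_group "T1F A" using T1_comm[OF A] .
  have s: "supp_fn (\<lambda>y. c * dl a y) \<subseteq> {a}" using supp_smul[of c "dl a"] by simp
  have "Psi A (\<lambda>y. c * dl a y) = finprod (T1F A) (\<lambda>b. t1F A b [^]\<^bsub>T1F A\<^esub> (c * dl a b)) {a}"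
    by (rule Psi_S[OF A _ s]) (use a in auto)
  also have "\<dots> = t1F A a [^]\<^bsub>T1F A\<^esub> (c * dl a a)"
    using TA.finprod_insert[of "{}" a "\<lambda>b. t1F A b [^]\<^bsub>T1F A\<^esub> (c * dl a b)"] pw_carr[OF A a] by simp
  finally show ?thesis by (simp add: dl_def)
qed

lemma Psi_dl: assumes A: "A \<in> Obj CC" and a: "a \<in> carrier (F A)" shows "Psi A (dl a) = t1F A a"
proof -
  have "Psi A (dl a) = Psi A (\<lambda>y. 1 * dl a y)" by simp
  also have "\<dots> = t1F A a [^]\<^bsub>T1F A\<^esub> (1::int)" by (rule Psi_smul_dl[OF A a])
  also have "\<dots> = t1F A a" by (rule group.int_pow_1[OF T1_group[OF A] t1_carr[OF a]])
  finally show ?thesis .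
qed

lemma V_neg: "V A u \<Longrightarrow> V A (- u)" by (simp add: V_def)
lemma V_add: assumes "V A u" "V A v" shows "V A (u + v)"
proof -
  have f: "finite (supp_fn u \<union> supp_fn v)" and s: "supp_fn u \<union> supp_fn v \<subseteq> carrier (F A)"
    using assms by (auto simp: V_def)
  have "finite (supp_fn (u + v))" by (rule finite_subset[OF supp_add f])
  moreover have "supp_fn (u + v) \<subseteq> carrier (F A)" using supp_add[of u v] s by (rule subset_trans)
  ultimately show ?thesis by (simp add: V_def)
qed
lemma V_dl: "a \<in> carrier (F A) \<Longrightarrow> V A (dl a)" by (simp add: V_def)
lemma V_smul_dl: assumes "a \<in> carrier (F A)" shows "V A (\<lambda>y. c * dl a y)"
proof -
  have s: "supp_fn (\<lambda>y. c * dl a y) \<subseteq> {a}" using supp_smul[of c "dl a"] by simp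
  have "finite (supp_fn (\<lambda>y. c * dl a y))" by (rule finite_subset[OF s]) simp
  then show ?thesis using s assms by (auto simp: V_def)
qed

lemma Psi_neg: assumes A: "A \<in> Obj CC" and u: "V A u" shows "Psi A (- u) = inv\<^bsub>T1F A\<^esub> Psi A u"
proof -
  interpret TA: comm_group "T1F A" using T1_comm[OF A] .
  have "Psi A u \<otimes>\<^bsub>T1F A\<^esub> Psi A (- u) = \<one>\<^bsub>T1F A\<^esub>"
    using Psi_add[OF A u V_neg[OF u]] Psi_zero[OF A] by simp
  then have "Psi A (- u) \<otimes>\<^bsub>T1F A\<^esub> Psi A u = \<one>\<^bsub>T1F A\<^esub>"
    using TA.m_comm[OF Psi_closed[OF A u] Psi_closed[OF A V_neg[OF u]]] by simp
  then show ?thesis using TA.inv_equality[OF _ Psi_closed[OF A u] Psi_closed[OF A V_neg[OF u]]] by simp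
qed

lemma Psi_mo: assumes A: "A \<in> Obj CC" and x: "x \<in> carrier (F A)"
  shows "Psi A (minus_one (F A) x) = t1F A x"
proof -
  interpret TA: comm_group "T1F A" using T1_comm[OF A] .
  have one: "\<one>\<^bsub>F A\<^esub> \<in> carrier (F A)" using monoid.one_closed[OF group.is_monoid[OF grp[OF A]]] .
  have "Psi A (minus_one (F A) x) = Psi A (dl x + - dl \<one>\<^bsub>F A\<^esub>)" by (simp add: minus_one_dl)
  also have "\<dots> = t1F A x \<otimes>\<^bsub>T1F A\<^esub> inv\<^bsub>T1F A\<^esub> t1F A \<one>\<^bsub>F A\<^esub>"
    using Psi_add[OF A V_dl[OF x] V_neg[OF V_dl[OF one]]] Psi_neg[OF A V_dl[OF one]] Psi_dl[OF A x] Psi_dl[OF A one]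
    by simp
  also have "\<dots> = t1F A x" using t1_one[OF A] t1_carr[OF x] by simp
  finally show ?thesis .
qed

end



context P85 begin

lemma Psi_nat: assumes f: "f \<in> mor_set CC A B" and u: "V A u"
  shows "Psi B (IFm Fm f u) = T1m CC F Fm f (Psi A u)"
proof -
  have A: "A \<in> Obj CC" and B: "B \<in> Obj CC" using ms_obj f by auto
  have main: "\<forall>u. supp_fn u \<subseteq> S \<longrightarrow> Psi B (IFm Fm f u) = T1m CC F Fm f (Psi A u)"
    if "finite S" "S \<subseteq> carrier (F A)" for S
    using that
  proof (induction S rule: finite_induct)
    case empty
    show ?case
    proof (intro allI impI)
      fix u :: "'a \<Rightarrow> int" assume "supp_fn u \<subseteq> {}"
      then have "u = 0" by (auto simp: supp_fn_def fun_eq_iff)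
      then show "Psi B (IFm Fm f u) = T1m CC F Fm f (Psi A u)"
        using Psi_zero[OF A] Psi_zero[OF B] T1m_one[OF f] by simp
    qed
  next
    case (insert a S)
    have a: "a \<in> carrier (F A)" and Sc: "S \<subseteq> carrier (F A)" using insert.prems by auto
    have IH: "\<forall>u. supp_fn u \<subseteq> S \<longrightarrow> Psi B (IFm Fm f u) = T1m CC F Fm f (Psi A u)"
      using insert.IH Sc by blast
    show ?case
    proof (intro allI impI)
      fix u :: "'a \<Rightarrow> int" assume su: "supp_fn u \<subseteq> insert a S"
      define v where "v = u(a := 0)"
      define c where "c = u a"
      have sv: "supp_fn v \<subseteq> S" using su by (auto simp: v_def supp_fn_def)
      have fv: "finite (supp_fn v)" by (rule finite_subset[OF sv insert.hyps(1)])
      have Vv: "V A v" using fv sv Sc by (auto simp: V_def)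
      have uv: "u = v + (\<lambda>y. c * dl a y)" by (auto simp: v_def c_def dl_def fun_eq_iff)
      have fd: "finite (supp_fn (\<lambda>y. c * dl a y))" using V_smul_dl[OF a] by (simp add: V_def)
      have fa: "Fm f a \<in> carrier (F B)" by (rule Fm_closed[OF f a])
      have Iu: "IFm Fm f u = IFm Fm f v + (\<lambda>y. c * dl (Fm f a) y)"
        using IFm_add[OF fv fd, of Fm f] IFm_smul_dl[of Fm f c a] uv by simp
      have VB: "V B (IFm Fm f v)"
      proof -
        have "supp_fn (IFm Fm f v) \<subseteq> carrier (F B)"
          using supp_IFm[OF fv, of Fm f] Fm_closed[OF f] sv Sc by blast
        then show ?thesis using fin_IFm[OF fv] by (simp add: V_def)
      qed
      have ta: "t1F A a \<in> carrier (T1F A)" by (rule t1_carr[OF a])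
      have pa: "t1F A a [^]\<^bsub>T1F A\<^esub> c \<in> carrier (T1F A)" by (rule pw_carr[OF A a])
      have "Psi B (IFm Fm f u) = Psi B (IFm Fm f v) \<otimes>\<^bsub>T1F B\<^esub> t1F B (Fm f a) [^]\<^bsub>T1F B\<^esub> c"
        using Iu Psi_add[OF B VB V_smul_dl[OF fa]] Psi_smul_dl[OF B fa] by simp
      also have "\<dots> = T1m CC F Fm f (Psi A v) \<otimes>\<^bsub>T1F B\<^esub> T1m CC F Fm f (t1F A a [^]\<^bsub>T1F A\<^esub> c)"
        using IH sv T1m_pow[OF f ta] T1m_t1[OF f a] by simp
      also have "\<dots> = T1m CC F Fm f (Psi A v \<otimes>\<^bsub>T1F A\<^esub> t1F A a [^]\<^bsub>T1F A\<^esub> c)"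
        by (rule T1m_mult[OF f Psi_closed[OF A Vv] pa, symmetric])
      also have "\<dots> = T1m CC F Fm f (Psi A u)"
        using uv Psi_add[OF A Vv V_smul_dl[OF a]] Psi_smul_dl[OF A a] by simp
      finally show "Psi B (IFm Fm f u) = T1m CC F Fm f (Psi A u)" .
    qed
  qed
  show ?thesis using main[of "supp_fn u"] u by (simp add: V_def)
qed

lemma V_IF: "u \<in> carrier (IF F A) \<Longrightarrow> V A u" by (simp add: IFc V_def)

lemma Psi_hom: assumes A: "A \<in> Obj CC" shows "group_hom (IF F A) (T1F A) (Psi A)"
proof -
  interpret IG: comm_group "IF F A" by (rule IF_comm_group)
  have "Psi A \<in> hom (IF F A) (T1F A)"
    by (rule homI) (auto simp: Psi_closed[OF A] V_IF Psi_add[OF A])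
  then show ?thesis
    using IG.is_group T1_group[OF A] by (simp add: group_hom_def group_hom_axioms_def)
qed

lemma Psi_surj: assumes A: "A \<in> Obj CC" shows "Psi A ` carrier (IF F A) = carrier (T1F A)"
proof
  show "Psi A ` carrier (IF F A) \<subseteq> carrier (T1F A)" using Psi_closed[OF A] V_IF by blast
  show "carrier (T1F A) \<subseteq> Psi A ` carrier (IF F A)"
  proof
    fix c assume "c \<in> carrier (T1F A)"
    then obtain x where x: "x \<in> carrier (F A)" "c = t1F A x" using t1_surj by blast
    have one: "\<one>\<^bsub>F A\<^esub> \<in> carrier (F A)" using monoid.one_closed[OF group.is_monoid[OF grp[OF A]]] .
    have "minus_one (F A) x \<in> carrier (IF F A)" unfolding minus_one_dl by (rule dl_diff_carr[of x F A, OF x(1) one])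
    moreover have "c = Psi A (minus_one (F A) x)" using Psi_mo[OF A x(1)] x(2) by simp
    ultimately show "c \<in> Psi A ` carrier (IF F A)" by blast
  qed
qed

end



lemma supp_diff: "supp_fn (u - v) \<subseteq> supp_fn u \<union> supp_fn (v::'a \<Rightarrow> int)"
  by (auto simp: supp_fn_def)
lemma fin_diff: assumes "finite (supp_fn u)" "finite (supp_fn v)" shows "finite (supp_fn (u - v))"
proof -
  have "finite (supp_fn u \<union> supp_fn v)" using assms by blast
  then show ?thesis by (rule finite_subset[OF supp_diff])
qed

lemma IFm_lin2: "IFm Fm f (dl a - dl b) = dl (Fm f a) - dl (Fm f b)"
  by (subst IFm_diff) (simp_all add: IFm_dl)

lemma IFm_lin4: "IFm Fm f (dl a - dl b - dl c + dl d) = dl (Fm f a) - dl (Fm f b) - dl (Fm f c) + dl (Fm f d)"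
proof -
  have f: "finite (supp_fn (dl a - dl b - dl c))" by (intro fin_diff) simp_all
  have f2: "finite (supp_fn (dl a - dl b))" by (intro fin_diff) simp_all
  have 1: "IFm Fm f (dl a - dl b - dl c + dl d) = IFm Fm f (dl a - dl b - dl c) + IFm Fm f (dl d)"
    by (rule IFm_add[OF f]) simp
  have 2: "IFm Fm f (dl a - dl b - dl c) = IFm Fm f (dl a - dl b) - IFm Fm f (dl c)"
    by (rule IFm_diff[OF f2]) simp
  show ?thesis by (simp only: 1 2 IFm_lin2 IFm_dl)
qed

context P85 begin

abbreviation "Kp A \<equiv> T1_kernel CC (IF F) (IFm Fm) A"
abbreviation "cr2p A \<equiv> cr2 CC (IF F) (IFm Fm) A"

lemma cr2p_mem: "z \<in> cr2p A \<longleftrightarrow> z \<in> carrier (IF F (P A)) \<and> IFm Fm (retr1 CC A) z = 0 \<and> IFm Fm (retr2 CC A) z = 0"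
  by (simp add: cr2_def)

lemma Kp_mem: "x \<in> Kp A \<longleftrightarrow> (\<exists>z\<in>cr2p A. x = IFm Fm (fold_mor CC A) z)"
  by (simp add: T1_kernel_def image_iff)

lemma IFm_carr: assumes f: "f \<in> mor_set CC A B" and u: "u \<in> carrier (IF F A)"
  shows "IFm Fm f u \<in> carrier (IF F B)"
proof -
  have fu: "finite (supp_fn u)" and su: "supp_fn u \<subseteq> carrier (F A)" and s0: "sum u (supp_fn u) = 0"
    using u by (auto simp: IFc)
  have "supp_fn (IFm Fm f u) \<subseteq> carrier (F B)" using supp_IFm[OF fu, of Fm f] Fm_closed[OF f] su by blast
  then show ?thesis using fin_IFm[OF fu, where Fm=Fm and f=f] sum_IFm[OF fu, where Fm=Fm and f=f] s0 by (simp add: IFc)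
qed

lemma cr2p_add: assumes "z1 \<in> cr2p A" "z2 \<in> cr2p A" shows "z1 + z2 \<in> cr2p A"
proof -
  have f1: "finite (supp_fn z1)" and f2: "finite (supp_fn z2)" using assms by (auto simp: cr2p_mem IFc)
  show ?thesis using assms IF_add_closed[where F=F and A="P A"] by (simp add: cr2p_mem IFm_add[OF f1 f2])
qed

lemma cr2p_neg: assumes "z \<in> cr2p A" shows "- z \<in> cr2p A"
proof -
  have f: "finite (supp_fn z)" using assms by (auto simp: cr2p_mem IFc)
  show ?thesis using assms IF_neg_closed[where F=F and A="P A"] by (simp add: cr2p_mem IFm_neg[OF f])
qed

lemma Kp_add: assumes "x \<in> Kp A" "y \<in> Kp A" shows "x + y \<in> Kp A"
proof -
  obtain z1 where z1: "z1 \<in> cr2p A" "x = IFm Fm (fold_mor CC A) z1" using assms(1) Kp_mem by meson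
  obtain z2 where z2: "z2 \<in> cr2p A" "y = IFm Fm (fold_mor CC A) z2" using assms(2) Kp_mem by meson
  have f1: "finite (supp_fn z1)" and f2: "finite (supp_fn z2)" using z1 z2 by (auto simp: cr2p_mem IFc)
  have "x + y = IFm Fm (fold_mor CC A) (z1 + z2)" unfolding z1(2) z2(2) by (rule IFm_add[OF f1 f2, symmetric])
  then show ?thesis using cr2p_add[OF z1(1) z2(1)] Kp_mem by meson
qed

lemma Kp_neg: assumes "x \<in> Kp A" shows "- x \<in> Kp A"
proof -
  obtain z where z: "z \<in> cr2p A" "x = IFm Fm (fold_mor CC A) z" using assms Kp_mem by meson
  have f: "finite (supp_fn z)" using z by (auto simp: cr2p_mem IFc)
  have "- x = IFm Fm (fold_mor CC A) (- z)" unfolding z(2) by (rule IFm_neg[OF f, symmetric])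
  then show ?thesis using cr2p_neg[OF z(1)] Kp_mem by meson
qed

lemma Kp_diff: "x \<in> Kp A \<Longrightarrow> y \<in> Kp A \<Longrightarrow> x - y \<in> Kp A"
  using Kp_add Kp_neg by (metis diff_conv_add_uminus)

lemma Kp_zero: assumes A: "A \<in> Obj CC" shows "0 \<in> Kp A"
proof -
  have "0 \<in> cr2p A" by (simp add: cr2p_mem IF_zero_closed)
  then show ?thesis using Kp_mem IFm_zero by metis
qed

lemma Kp_mo: assumes A: "A \<in> Obj CC" and k: "k \<in> K A" shows "dl k - dl \<one>\<^bsub>F A\<^esub> \<in> Kp A"
proof -
  obtain h where h: "h \<in> cr2 CC F Fm A" "k = Fm (fold_mor CC A) h" using k Kmem by meson
  have hc: "h \<in> carrier (F (P A))" using h by (simp add: cr2_def)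
  have one: "\<one>\<^bsub>F (P A)\<^esub> \<in> carrier (F (P A))" using monoid.one_closed[OF group.is_monoid[OF grp[OF cop_obj[OF A A]]]] .
  let ?z = "dl h - dl \<one>\<^bsub>F (P A)\<^esub>"
  have "?z \<in> cr2p A" unfolding cr2p_mem using h dl_diff_carr[of h F "P A", OF hc one]
    by (simp add: IFm_lin2 Fm_one[OF retr1_ms[OF A]] Fm_one[OF retr2_ms[OF A]] cr2_def)
  moreover have "dl k - dl \<one>\<^bsub>F A\<^esub> = IFm Fm (fold_mor CC A) ?z"
    by (simp add: IFm_lin2 h(2) Fm_one[OF fold_ms[OF A]])
  ultimately show ?thesis using Kp_mem by meson
qed

lemma Kp_e: assumes A: "A \<in> Obj CC" and x: "x \<in> carrier (F A)" and y: "y \<in> carrier (F A)"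
  shows "dl (x \<otimes>\<^bsub>F A\<^esub> y) - dl x - dl y + dl \<one>\<^bsub>F A\<^esub> \<in> Kp A"
proof -
  interpret G: group "F (P A)" using grp cop_obj A by blast
  interpret GA: group "F A" using grp A by blast
  note fo = fold_ms[OF A] and r1 = retr1_ms[OF A] and r2 = retr2_ms[OF A]
  define p where "p = Fm (i1 A) x"
  define q where "q = Fm (i2 A) y"
  have p: "p \<in> carrier (F (P A))" unfolding p_def using Fm_closed[OF i1_ms[OF A] x] .
  have q: "q \<in> carrier (F (P A))" unfolding q_def using Fm_closed[OF i2_ms[OF A] y] .
  let ?z = "dl (p \<otimes>\<^bsub>F (P A)\<^esub> q) - dl p - dl q + dl \<one>\<^bsub>F (P A)\<^esub>"
  have zeq: "?z = (dl (p \<otimes>\<^bsub>F (P A)\<^esub> q) - dl p) - (dl q - dl \<one>\<^bsub>F (P A)\<^esub>)" by (simp add: algebra_simps)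
  have zc: "?z \<in> carrier (IF F (P A))" unfolding zeq
    by (rule IF_diff_closed) (rule dl_diff_carr; use p q in simp)+
  have "IFm Fm (retr1 CC A) ?z = 0"
    unfolding IFm_lin4 using p q x y
    by (simp add: Fm_mult[OF r1] Fm_one[OF r1] p_def q_def r1_i1[OF A] r1_i2[OF A])
  moreover have "IFm Fm (retr2 CC A) ?z = 0"
    unfolding IFm_lin4 using p q x y
    by (simp add: Fm_mult[OF r2] Fm_one[OF r2] p_def q_def r2_i1[OF A] r2_i2[OF A])
  ultimately have "?z \<in> cr2p A" using zc by (simp add: cr2p_mem)
  moreover have "dl (x \<otimes>\<^bsub>F A\<^esub> y) - dl x - dl y + dl \<one>\<^bsub>F A\<^esub> = IFm Fm (fold_mor CC A) ?z"
    unfolding IFm_lin4 using p q x y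
    by (simp add: Fm_mult[OF fo] Fm_one[OF fo] p_def q_def fold_i1[OF A] fold_i2[OF A])
  ultimately show ?thesis using Kp_mem by meson
qed

end



context P85 begin

lemma Kp_pow: assumes A: "A \<in> Obj CC" and a: "a \<in> carrier (F A)"
  shows "dl (a [^]\<^bsub>F A\<^esub> (k::int)) - dl \<one>\<^bsub>F A\<^esub> - (\<lambda>y. k * (dl a y - dl \<one>\<^bsub>F A\<^esub> y)) \<in> Kp A"
proof (induction k rule: int_induct[where k=0])
  case base
  have "dl (a [^]\<^bsub>F A\<^esub> (0::int)) - dl \<one>\<^bsub>F A\<^esub> - (\<lambda>y. 0 * (dl a y - dl \<one>\<^bsub>F A\<^esub> y)) = 0"
    by (simp add: fun_eq_iff)
  then show ?case using Kp_zero[OF A] by simp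
next
  case (step1 i)
  interpret GA: group "F A" using grp A by blast
  have ai: "a [^]\<^bsub>F A\<^esub> i \<in> carrier (F A)" using a by simp
  have eq: "a [^]\<^bsub>F A\<^esub> (i + 1) = a [^]\<^bsub>F A\<^esub> i \<otimes>\<^bsub>F A\<^esub> a" using GA.int_pow_mult[OF a, of i 1] a by simp
  have e: "dl (a [^]\<^bsub>F A\<^esub> i \<otimes>\<^bsub>F A\<^esub> a) - dl (a [^]\<^bsub>F A\<^esub> i) - dl a + dl \<one>\<^bsub>F A\<^esub> \<in> Kp A"
    by (rule Kp_e[OF A ai a])
  have "dl (a [^]\<^bsub>F A\<^esub> (i + 1)) - dl \<one>\<^bsub>F A\<^esub> - (\<lambda>y. (i + 1) * (dl a y - dl \<one>\<^bsub>F A\<^esub> y))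
     = (dl (a [^]\<^bsub>F A\<^esub> i \<otimes>\<^bsub>F A\<^esub> a) - dl (a [^]\<^bsub>F A\<^esub> i) - dl a + dl \<one>\<^bsub>F A\<^esub>)
       + (dl (a [^]\<^bsub>F A\<^esub> i) - dl \<one>\<^bsub>F A\<^esub> - (\<lambda>y. i * (dl a y - dl \<one>\<^bsub>F A\<^esub> y)))"
    unfolding eq by (simp add: fun_eq_iff algebra_simps)
  then show ?case using Kp_add[OF e step1.IH] by (simp only:)
next
  case (step2 i)
  interpret GA: group "F A" using grp A by blast
  have ai: "a [^]\<^bsub>F A\<^esub> (i - 1) \<in> carrier (F A)" using a by simp
  have eq: "a [^]\<^bsub>F A\<^esub> i = a [^]\<^bsub>F A\<^esub> (i - 1) \<otimes>\<^bsub>F A\<^esub> a" using GA.int_pow_mult[OF a, of "i - 1" 1] a by simp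
  have e: "dl (a [^]\<^bsub>F A\<^esub> (i - 1) \<otimes>\<^bsub>F A\<^esub> a) - dl (a [^]\<^bsub>F A\<^esub> (i - 1)) - dl a + dl \<one>\<^bsub>F A\<^esub> \<in> Kp A"
    by (rule Kp_e[OF A ai a])
  have "dl (a [^]\<^bsub>F A\<^esub> (i - 1)) - dl \<one>\<^bsub>F A\<^esub> - (\<lambda>y. (i - 1) * (dl a y - dl \<one>\<^bsub>F A\<^esub> y))
     = (dl (a [^]\<^bsub>F A\<^esub> i) - dl \<one>\<^bsub>F A\<^esub> - (\<lambda>y. i * (dl a y - dl \<one>\<^bsub>F A\<^esub> y)))
       - (dl (a [^]\<^bsub>F A\<^esub> (i - 1) \<otimes>\<^bsub>F A\<^esub> a) - dl (a [^]\<^bsub>F A\<^esub> (i - 1)) - dl a + dl \<one>\<^bsub>F A\<^esub>)"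
    unfolding eq[symmetric] by (simp add: fun_eq_iff algebra_simps)
  then show ?case using Kp_diff[OF step2.IH e] by (simp only:)
qed


lemma Kp_main: assumes A: "A \<in> Obj CC" and fS: "finite S" and Sc: "S \<subseteq> carrier (F A)"
  shows "\<forall>u. supp_fn u \<subseteq> S \<longrightarrow> (\<exists>w\<in>carrier (F A). t1F A w = Psi A u \<and>
     u - (\<lambda>y. (\<Sum>b\<in>S. u b) * dl \<one>\<^bsub>F A\<^esub> y) - (dl w - dl \<one>\<^bsub>F A\<^esub>) \<in> Kp A)"
  using fS Sc
proof (induction S rule: finite_induct)
  case empty
  have one: "\<one>\<^bsub>F A\<^esub> \<in> carrier (F A)" using monoid.one_closed[OF group.is_monoid[OF grp[OF A]]] .
  show ?case
  proof (intro allI impI)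
    fix u :: "'a \<Rightarrow> int" assume "supp_fn u \<subseteq> {}"
    then have u0: "u = 0" by (auto simp: supp_fn_def fun_eq_iff)
    have eq: "u - (\<lambda>y. (\<Sum>b\<in>{}. u b) * dl \<one>\<^bsub>F A\<^esub> y) - (dl \<one>\<^bsub>F A\<^esub> - dl \<one>\<^bsub>F A\<^esub>) = 0"
      using u0 by (simp add: fun_eq_iff)
    have m: "u - (\<lambda>y. (\<Sum>b\<in>{}. u b) * dl \<one>\<^bsub>F A\<^esub> y) - (dl \<one>\<^bsub>F A\<^esub> - dl \<one>\<^bsub>F A\<^esub>) \<in> Kp A"
      unfolding eq by (rule Kp_zero[OF A])
    have t: "t1F A \<one>\<^bsub>F A\<^esub> = Psi A u" using t1_one[OF A] Psi_zero[OF A] u0 by simp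
    show "\<exists>w\<in>carrier (F A). t1F A w = Psi A u \<and>
       u - (\<lambda>y. (\<Sum>b\<in>{}. u b) * dl \<one>\<^bsub>F A\<^esub> y) - (dl w - dl \<one>\<^bsub>F A\<^esub>) \<in> Kp A"
      using one t m by blast
  qed
next
  case (insert a S)
  interpret GA: group "F A" using grp A by blast
  have a: "a \<in> carrier (F A)" and Sc: "S \<subseteq> carrier (F A)" using insert.prems by auto
  have IH: "\<forall>u. supp_fn u \<subseteq> S \<longrightarrow> (\<exists>w\<in>carrier (F A). t1F A w = Psi A u \<and>
     u - (\<lambda>y. (\<Sum>b\<in>S. u b) * dl \<one>\<^bsub>F A\<^esub> y) - (dl w - dl \<one>\<^bsub>F A\<^esub>) \<in> Kp A)"
    using insert.IH Sc by blast
  show ?case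
  proof (intro allI impI)
    fix u :: "'a \<Rightarrow> int" assume su: "supp_fn u \<subseteq> insert a S"
    define v where "v = u(a := 0)"
    define c where "c = u a"
    have sv: "supp_fn v \<subseteq> S" using su by (auto simp: v_def supp_fn_def)
    have fv: "finite (supp_fn v)" by (rule finite_subset[OF sv insert.hyps(1)])
    have Vv: "V A v" using fv sv Sc by (auto simp: V_def)
    have uv: "u = v + (\<lambda>y. c * dl a y)" by (auto simp: v_def c_def dl_def fun_eq_iff)
    obtain w where w: "w \<in> carrier (F A)" "t1F A w = Psi A v"
      and R: "v - (\<lambda>y. (\<Sum>b\<in>S. v b) * dl \<one>\<^bsub>F A\<^esub> y) - (dl w - dl \<one>\<^bsub>F A\<^esub>) \<in> Kp A"
      using IH sv by blast
    have ac: "a [^]\<^bsub>F A\<^esub> c \<in> carrier (F A)" using a by simp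
    define w' where "w' = w \<otimes>\<^bsub>F A\<^esub> a [^]\<^bsub>F A\<^esub> c"
    have w'c: "w' \<in> carrier (F A)" unfolding w'_def using w(1) ac by simp
    have t: "t1F A w' = Psi A u"
    proof -
      have "t1F A w' = Psi A v \<otimes>\<^bsub>T1F A\<^esub> t1F A a [^]\<^bsub>T1F A\<^esub> c"
        unfolding w'_def using t1_mult[OF A w(1) ac] t1_pow[OF A a] w(2) by simp
      also have "\<dots> = Psi A u"
        using uv Psi_add[OF A Vv V_smul_dl[OF a]] Psi_smul_dl[OF A a] by simp
      finally show ?thesis .
    qed
    have sums: "(\<Sum>b\<in>insert a S. u b) = c + (\<Sum>b\<in>S. v b)"
    proof -
      have "(\<Sum>b\<in>S. v b) = (\<Sum>b\<in>S. u b)" using insert.hyps(2) by (intro sum.cong) (auto simp: v_def)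
      then show ?thesis using insert.hyps by (simp add: c_def)
    qed
    have P: "dl (a [^]\<^bsub>F A\<^esub> c) - dl \<one>\<^bsub>F A\<^esub> - (\<lambda>y. c * (dl a y - dl \<one>\<^bsub>F A\<^esub> y)) \<in> Kp A"
      by (rule Kp_pow[OF A a])
    have E: "dl (w \<otimes>\<^bsub>F A\<^esub> a [^]\<^bsub>F A\<^esub> c) - dl w - dl (a [^]\<^bsub>F A\<^esub> c) + dl \<one>\<^bsub>F A\<^esub> \<in> Kp A"
      by (rule Kp_e[OF A w(1) ac])
    have eq: "u - (\<lambda>y. (\<Sum>b\<in>insert a S. u b) * dl \<one>\<^bsub>F A\<^esub> y) - (dl w' - dl \<one>\<^bsub>F A\<^esub>)
      = (v - (\<lambda>y. (\<Sum>b\<in>S. v b) * dl \<one>\<^bsub>F A\<^esub> y) - (dl w - dl \<one>\<^bsub>F A\<^esub>))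
        - (dl (a [^]\<^bsub>F A\<^esub> c) - dl \<one>\<^bsub>F A\<^esub> - (\<lambda>y. c * (dl a y - dl \<one>\<^bsub>F A\<^esub> y)))
        - (dl (w \<otimes>\<^bsub>F A\<^esub> a [^]\<^bsub>F A\<^esub> c) - dl w - dl (a [^]\<^bsub>F A\<^esub> c) + dl \<one>\<^bsub>F A\<^esub>)"
      unfolding sums w'_def by (subst uv) (simp add: fun_eq_iff algebra_simps)
    have m: "u - (\<lambda>y. (\<Sum>b\<in>insert a S. u b) * dl \<one>\<^bsub>F A\<^esub> y) - (dl w' - dl \<one>\<^bsub>F A\<^esub>) \<in> Kp A"
      unfolding eq by (rule Kp_diff[OF Kp_diff[OF R P] E])
    show "\<exists>w\<in>carrier (F A). t1F A w = Psi A u \<and>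
       u - (\<lambda>y. (\<Sum>b\<in>insert a S. u b) * dl \<one>\<^bsub>F A\<^esub> y) - (dl w - dl \<one>\<^bsub>F A\<^esub>) \<in> Kp A"
      using w'c t m by blast
  qed
qed

lemma ker_eq: assumes A: "A \<in> Obj CC" shows "Kp A = kernel (IF F A) (T1F A) (Psi A)"
proof
  show "Kp A \<subseteq> kernel (IF F A) (T1F A) (Psi A)"
  proof
    fix x assume "x \<in> Kp A"
    then obtain z where z: "z \<in> cr2p A" "x = IFm Fm (fold_mor CC A) z" using Kp_mem by meson
    have PA: "P A \<in> Obj CC" by (rule cop_obj[OF A A])
    interpret G: group "F (P A)" using grp[OF PA] .
    interpret GA: group "F A" using grp[OF A] .
    interpret N: normal "K A" "F A" using K_normal[OF A] .
    note fo = fold_ms[OF A] and r1 = retr1_ms[OF A] and r2 = retr2_ms[OF A]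
    have zc: "z \<in> carrier (IF F (P A))" and z1: "IFm Fm (retr1 CC A) z = 0"
      and z2: "IFm Fm (retr2 CC A) z = 0" using z(1) by (auto simp: cr2p_mem)
    have Vz: "V (P A) z" using V_IF[OF zc] .
    have xc: "x \<in> carrier (IF F A)" using IFm_carr[OF fo zc] z(2) by simp
    obtain h where h: "h \<in> carrier (F (P A))" "Psi (P A) z = t1F (P A) h"
      using t1_surj[OF Psi_closed[OF PA Vz]] by blast
    define s1 where "s1 = Fm (retr1 CC A) h"
    define s2 where "s2 = Fm (retr2 CC A) h"
    have s1c: "s1 \<in> carrier (F A)" unfolding s1_def by (rule Fm_closed[OF r1 h(1)])
    have s2c: "s2 \<in> carrier (F A)" unfolding s2_def by (rule Fm_closed[OF r2 h(1)])
    have "t1F A s1 = T1m CC F Fm (retr1 CC A) (t1F (P A) h)" unfolding s1_def by (rule T1m_t1[OF r1 h(1), symmetric])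
    also have "\<dots> = Psi A (IFm Fm (retr1 CC A) z)" using Psi_nat[OF r1 Vz] h(2) by simp
    also have "\<dots> = \<one>\<^bsub>T1F A\<^esub>" using z1 Psi_zero[OF A] by simp
    finally have k1: "s1 \<in> K A" using t1_eq_one[OF A s1c] by simp
    have "t1F A s2 = T1m CC F Fm (retr2 CC A) (t1F (P A) h)" unfolding s2_def by (rule T1m_t1[OF r2 h(1), symmetric])
    also have "\<dots> = Psi A (IFm Fm (retr2 CC A) z)" using Psi_nat[OF r2 Vz] h(2) by simp
    also have "\<dots> = \<one>\<^bsub>T1F A\<^esub>" using z2 Psi_zero[OF A] by simp
    finally have k2: "s2 \<in> K A" using t1_eq_one[OF A s2c] by simp
    have j1: "Fm (i1 A) s1 \<in> carrier (F (P A))" by (rule Fm_closed[OF i1_ms[OF A] s1c])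
    have j2: "Fm (i2 A) s2 \<in> carrier (F (P A))" by (rule Fm_closed[OF i2_ms[OF A] s2c])
    define h' where "h' = h \<otimes>\<^bsub>F (P A)\<^esub> inv\<^bsub>F (P A)\<^esub> Fm (i1 A) s1 \<otimes>\<^bsub>F (P A)\<^esub> inv\<^bsub>F (P A)\<^esub> Fm (i2 A) s2"
    have h'c: "h' \<in> carrier (F (P A))" unfolding h'_def using h(1) j1 j2 by simp
    have "Fm (retr1 CC A) h' = \<one>\<^bsub>F A\<^esub>"
      unfolding h'_def using h(1) j1 j2 s1c s2c
      by (simp add: Fm_mult[OF r1] Fm_inv[OF r1] r1_i1[OF A] r1_i2[OF A] s1_def[symmetric])
    moreover have "Fm (retr2 CC A) h' = \<one>\<^bsub>F A\<^esub>"
      unfolding h'_def using h(1) j1 j2 s1c s2c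
      by (simp add: Fm_mult[OF r2] Fm_inv[OF r2] r2_i1[OF A] r2_i2[OF A] s2_def[symmetric] GA.m_assoc)
    ultimately have "h' \<in> cr2 CC F Fm A" using h'c by (simp add: cr2_def)
    then have kh': "Fm (fold_mor CC A) h' \<in> K A" unfolding Kmem by blast
    have fh': "Fm (fold_mor CC A) h' = Fm (fold_mor CC A) h \<otimes>\<^bsub>F A\<^esub> inv\<^bsub>F A\<^esub> s1 \<otimes>\<^bsub>F A\<^esub> inv\<^bsub>F A\<^esub> s2"
      unfolding h'_def using h(1) j1 j2 s1c s2c
      by (simp add: Fm_mult[OF fo] Fm_inv[OF fo] fold_i1[OF A] fold_i2[OF A])
    have fhc: "Fm (fold_mor CC A) h \<in> carrier (F A)" by (rule Fm_closed[OF fo h(1)])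
    have fh: "Fm (fold_mor CC A) h = Fm (fold_mor CC A) h' \<otimes>\<^bsub>F A\<^esub> s2 \<otimes>\<^bsub>F A\<^esub> s1"
      unfolding fh' using fhc s1c s2c by (simp add: GA.m_assoc)
    have fK: "Fm (fold_mor CC A) h \<in> K A" unfolding fh using kh' k1 k2 by (intro N.m_closed)
    have "Psi A x = T1m CC F Fm (fold_mor CC A) (Psi (P A) z)" using Psi_nat[OF fo Vz] z(2) by simp
    also have "\<dots> = t1F A (Fm (fold_mor CC A) h)" using h(2) T1m_t1[OF fo h(1)] by simp
    also have "\<dots> = \<one>\<^bsub>T1F A\<^esub>" using t1_eq_one[OF A fhc] fK by simp
    finally show "x \<in> kernel (IF F A) (T1F A) (Psi A)" unfolding kernel_def using xc by simp
  qed
  show "kernel (IF F A) (T1F A) (Psi A) \<subseteq> Kp A"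
  proof
    fix u assume "u \<in> kernel (IF F A) (T1F A) (Psi A)"
    then have uc: "u \<in> carrier (IF F A)" and pu: "Psi A u = \<one>\<^bsub>T1F A\<^esub>" by (auto simp: kernel_def)
    have fu: "finite (supp_fn u)" and su: "supp_fn u \<subseteq> carrier (F A)" and s0: "sum u (supp_fn u) = 0"
      using uc by (auto simp: IFc)
    obtain w where w: "w \<in> carrier (F A)" "t1F A w = Psi A u"
      and R: "u - (\<lambda>y. (\<Sum>b\<in>supp_fn u. u b) * dl \<one>\<^bsub>F A\<^esub> y) - (dl w - dl \<one>\<^bsub>F A\<^esub>) \<in> Kp A"
      using Kp_main[OF A fu su] by blast
    have "w \<in> K A" using t1_eq_one[OF A w(1)] w(2) pu by simp
    then have M: "dl w - dl \<one>\<^bsub>F A\<^esub> \<in> Kp A" by (rule Kp_mo[OF A])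
    have eq: "u = (u - (\<lambda>y. (\<Sum>b\<in>supp_fn u. u b) * dl \<one>\<^bsub>F A\<^esub> y) - (dl w - dl \<one>\<^bsub>F A\<^esub>)) + (dl w - dl \<one>\<^bsub>F A\<^esub>)"
      using s0 by (simp add: fun_eq_iff)
    show "u \<in> Kp A" by (subst eq) (rule Kp_add[OF R M])
  qed
qed

lemma img_coset: assumes A: "A \<in> Obj CC" and u: "u \<in> carrier (IF F A)"
  shows "Psi A ` (Kp A #>\<^bsub>IF F A\<^esub> u) = {Psi A u}"
proof -
  interpret H: group_hom "IF F A" "T1F A" "Psi A" using Psi_hom[OF A] .
  have "Psi A (k + u) = Psi A u" if k: "k \<in> Kp A" for k
  proof -
    have kk: "k \<in> kernel (IF F A) (T1F A) (Psi A)" using k ker_eq[OF A] by simp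
    then have kc: "k \<in> carrier (IF F A)" and pk: "Psi A k = \<one>\<^bsub>T1F A\<^esub>" by (auto simp: kernel_def)
    have "Psi A (k \<otimes>\<^bsub>IF F A\<^esub> u) = Psi A k \<otimes>\<^bsub>T1F A\<^esub> Psi A u" by (rule H.hom_mult[OF kc u])
    then show ?thesis using pk H.H.l_one[OF H.hom_closed[OF u]] by simp
  qed
  moreover have "0 \<in> Kp A" by (rule Kp_zero[OF A])
  ultimately show ?thesis unfolding r_coset_def by force
qed

end



theorem proposition8p5:
  fixes CC :: "('o,'m) pcat"
    and F :: "'o \<Rightarrow> 'a monoid"
    and Fm :: "'m \<Rightarrow> 'a \<Rightarrow> 'a"
  assumes "pointed_cat_fin_coprod CC"
    and "group_functor CC F Fm"
    and "reduced CC F"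
  shows "\<exists>\<theta> :: 'o \<Rightarrow> ('a \<Rightarrow> int) set \<Rightarrow> 'a set.
     (\<forall>A\<in>Obj CC. \<theta> A \<in> iso (T1 CC (IF F) (IFm Fm) A) (T1 CC F Fm A)) \<and>
     (\<forall>f\<in>Mor CC. \<forall>c\<in>carrier (T1 CC (IF F) (IFm Fm) (Dom CC f)).
        \<theta> (Cod CC f) (T1m CC (IF F) (IFm Fm) f c) = T1m CC F Fm f (\<theta> (Dom CC f) c)) \<and>
     (\<forall>A\<in>Obj CC. \<forall>x\<in>carrier (F A).
        \<theta> A (t1 CC (IF F) (IFm Fm) A (minus_one (F A) x)) = t1 CC F Fm A x)"
proof -
  interpret P85 CC F Fm using assms by (rule P85.intro)
  define \<theta> where "\<theta> = (\<lambda>A0 Y. the_elem (Psi A0 ` Y))"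
  have T1eq: "T1 CC (IF F) (IFm Fm) A = IF F A Mod kernel (IF F A) (T1F A) (Psi A)" if A: "A \<in> Obj CC" for A
    by (simp add: T1_def ker_eq[OF A])
  have th: "\<theta> A (Kp A #>\<^bsub>IF F A\<^esub> u) = Psi A u" if A: "A \<in> Obj CC" and u: "u \<in> carrier (IF F A)" for A u
    unfolding \<theta>_def img_coset[OF A u] by simp
  show ?thesis
  proof (intro exI[of _ \<theta>] conjI ballI)
    fix A assume A: "A \<in> Obj CC"
    interpret H: group_hom "IF F A" "T1F A" "Psi A" using Psi_hom[OF A] .
    show "\<theta> A \<in> iso (T1 CC (IF F) (IFm Fm) A) (T1 CC F Fm A)"
      unfolding T1eq[OF A] \<theta>_def using H.FactGroup_iso_set[OF Psi_surj[OF A]] by simp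
  next
    fix A x assume A: "A \<in> Obj CC" and x: "x \<in> carrier (F A)"
    have one: "\<one>\<^bsub>F A\<^esub> \<in> carrier (F A)" using monoid.one_closed[OF group.is_monoid[OF grp[OF A]]] .
    have mc: "minus_one (F A) x \<in> carrier (IF F A)" unfolding minus_one_dl
      by (rule dl_diff_carr[of x F A, OF x one])
    show "\<theta> A (t1 CC (IF F) (IFm Fm) A (minus_one (F A) x)) = t1 CC F Fm A x"
      unfolding t1_def[of CC "IF F"] th[OF A mc] using Psi_mo[OF A x] by simp
  next
    fix f c assume f0: "f \<in> Mor CC" and c: "c \<in> carrier (T1 CC (IF F) (IFm Fm) (Dom CC f))"
    define A where "A = Dom CC f"
    define B where "B = Cod CC f"
    have f: "f \<in> mor_set CC A B" using f0 by (simp add: ms A_def B_def)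
    have A: "A \<in> Obj CC" and B: "B \<in> Obj CC" using ms_obj[OF f] by auto
    interpret IG: comm_group "IF F A" by (rule IF_comm_group)
    interpret H: group_hom "IF F A" "T1F A" "Psi A" using Psi_hom[OF A] .
    have sub: "subgroup (Kp A) (IF F A)" using H.subgroup_kernel ker_eq[OF A] by simp
    have "c \<in> carrier (IF F A Mod Kp A)" using c by (simp add: A_def T1_def)
    then obtain u0 where u0: "u0 \<in> carrier (IF F A)" "c = Kp A #>\<^bsub>IF F A\<^esub> u0"
      unfolding carrier_FactGroup by blast
    define u where "u = (SOME u. u \<in> c)"
    have "u0 \<in> c" unfolding u0(2) by (rule IG.rcos_self[OF u0(1) sub])
    then have uc': "u \<in> c" unfolding u_def by (rule someI[of "\<lambda>u. u \<in> c"])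
    have uc: "u \<in> carrier (IF F A)"
      using uc' u0 subgroup.elemrcos_carrier[OF sub IG.is_group] by blast
    have ceq: "c = Kp A #>\<^bsub>IF F A\<^esub> u"
      unfolding u0(2) using IG.repr_independence[OF _ u0(1) sub] uc' u0(2) by blast
    have "\<theta> B (T1m CC (IF F) (IFm Fm) f c) = \<theta> B (Kp B #>\<^bsub>IF F B\<^esub> IFm Fm f u)"
      by (simp add: T1m_def t1_def B_def u_def)
    also have "\<dots> = Psi B (IFm Fm f u)" by (rule th[OF B IFm_carr[OF f uc]])
    also have "\<dots> = T1m CC F Fm f (Psi A u)" by (rule Psi_nat[OF f V_IF[OF uc]])
    also have "\<dots> = T1m CC F Fm f (\<theta> A c)" unfolding ceq th[OF A uc] ..
    finally show "\<theta> (Cod CC f) (T1m CC (IF F) (IFm Fm) f c) = T1m CC F Fm f (\<theta> (Dom CC f) c)"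
      by (simp add: A_def B_def)
  qed
qed


end
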